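(* Let $a,b\ge1$ be coprime integers with $a\le b$, and write $$P_{a/b}(u,v,w)=\sum_{k\ge0}S_k(v,w)\,u^k=\sum_{k\ge0}R_k(u,w)\,v^k=\sum_{k\ge0}T_k(u,v)\,w^k$$ with polynomials $S_k,R_k,T_k$. Then: (1) $S_0(v,w)=v^b(v+w)^{a-1}$; (2) $R_0(u,w)=u^a(u+w)^{b-1}$; (3) if $b\ge 3$, $R_1(u,w)=(3a-1)\,u^a(u+w)^{b-2}+(b-2a)\,u^{a+1}(u+w)^{b-3}$; (4) $T_0(u,v)=(u+v)^{a+b-1}$; (5) if $a+b\ge 3$, $T_1(u,v)=(a-1)(u+v)^{a+b-2}+(b-a)\,u\,(u+v)^{a+b-3}$; (6) if $a+b\ge5$, $T_2(u,v)=\frac{(a-1)(a-2)}{2}(u+v)^{a+b-3}+\big[a(b-a)-a\big]u(u+v)^{a+b-4}+\frac12\big[(b-a)^2+5a-3b\big]u^2(u+v)^{a+b-5}$.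
   Context: Markov polynomials. Let $x,y,z$ be indeterminates. Consider the set consisting of all rationals $\rho\in[0,1]$, each written in lowest terms $\rho=a/b$ with integers $a\ge 0$, $b\ge 1$, together with the formal symbol $1/0$. Define Laurent polynomials $M_\rho(x,y,z)$ recursively by $M_{1/0}=y$, $M_{0/1}=x$, $M_{1/1}=\frac{x^2+y^2}{z}$, and: whenever $a/b$, $c/d$ are in this set with $|ad-bc|=1$ and $(a+2c)/(b+2d)\in[0,1]$, then $M_{\frac{a+2c}{b+2d}}=\big(M_{c/d}^2+M_{\frac{a+c}{b+d}}^2\big)/M_{a/b}$. This determines $M_\rho$ for every rational $\rho\in[0,1]$. Numerator. For coprime $1\le a\le b$, $P_{a/b}(u,v,w)$ denotes the homogeneous polynomial of degree $a+b-1$ such that $M_{a/b}(x,y,z)=P_{a/b}(x^2,y^2,z^2)/(x^{a-1}y^{b-1}z^{a+b-1})$; its existence is known. *)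

theory Defs
  imports "HOL-Computational_Algebra.Polynomial" "HOL-Computational_Algebra.Fraction_Field"
begin

text \<open>Trivariate integer polynomials in u, v, w are represented as nested univariate
  polynomials: type int poly poly poly, where u is the innermost variable,
  v the middle one and w the outermost one.  The same ring, with variables
  renamed x, y, z, is used for the Markov Laurent polynomials, which are taken
  in its field of fractions.\<close>

type_synonym tri = "int poly poly poly"

definition varU :: tri where "varU = [:[:[:0, 1:]:]:]"
definition varV :: tri where "varV = [:[:0, 1:]:]"
definition varW :: tri where "varW = [:0, 1:]"

definition ev3 :: "tri \<Rightarrow> 'a::comm_ring_1 \<Rightarrow> 'a \<Rightarrow> 'a \<Rightarrow> 'a" where
  "ev3 p u v w =
     poly (map_poly (\<lambda>q. poly (map_poly (\<lambda>r. poly (map_poly of_int r) u) q) v) p) w"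

type_synonym K = "tri fract"

definition Xk :: K where "Xk = Fract varU 1"
definition Yk :: K where "Yk = Fract varV 1"
definition Zk :: K where "Zk = Fract varW 1"

text \<open>Index set: rationals in [0,1] in lowest terms a/b (pairs (a,b)), plus the
  formal symbol 1/0, represented by the pair (1,0).\<close>
definition markov_index :: "(nat \<times> nat) set" where
  "markov_index = {(a, b). coprime a b \<and> (a \<le> b \<or> (a, b) = (1, 0))}"

definition markov_rules :: "(nat \<times> nat \<Rightarrow> K) \<Rightarrow> bool" where
  "markov_rules M \<longleftrightarrow>
     M (1, 0) = Yk \<and> M (0, 1) = Xk \<and> M (1, 1) = (Xk^2 + Yk^2) / Zk \<and>
     (\<forall>a b c d. (a, b) \<in> markov_index \<and> (c, d) \<in> markov_index \<and>
        \<bar>int a * int d - int b * int c\<bar> = 1 \<and> a + 2 * c \<le> b + 2 * d \<longrightarrow>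
        M (a + 2 * c, b + 2 * d) = (M (c, d)^2 + M (a + c, b + d)^2) / M (a, b))"

definition markov :: "nat \<times> nat \<Rightarrow> K" where
  "markov = (THE M. markov_rules M \<and> (\<forall>\<rho>. \<rho> \<notin> markov_index \<longrightarrow> M \<rho> = 0))"

definition markovP :: "nat \<Rightarrow> nat \<Rightarrow> tri" where
  "markovP a b = (THE p. markov (a, b) =
      ev3 p (Xk^2) (Yk^2) (Zk^2) / (Xk^(a - 1) * Yk^(b - 1) * Zk^(a + b - 1)))"

text \<open>Coefficient extraction, the result being viewed again as a trivariate polynomial
  (not depending on the extracted variable).\<close>
definition coeffU :: "tri \<Rightarrow> nat \<Rightarrow> tri" where
  "coeffU p k = map_poly (map_poly (\<lambda>r. [:coeff r k:])) p"
definition coeffV :: "tri \<Rightarrow> nat \<Rightarrow> tri" where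
  "coeffV p k = map_poly (\<lambda>q. [:coeff q k:]) p"
definition coeffW :: "tri \<Rightarrow> nat \<Rightarrow> tri" where
  "coeffW p k = [:coeff p k:]"

end

theory Submission
  imports Defs
begin


lemma map_poly_add_hom:
  assumes "f 0 = 0" "\<And>a b. f (a + b) = f a + f b"
  shows "map_poly f (p + q) = map_poly f p + map_poly f q"
  by (intro poly_eqI) (simp add: coeff_map_poly assms)

lemma map_poly_minus_hom:
  assumes "f 0 = 0" "\<And>a b. f (a - b) = f a - f b"
  shows "map_poly f (p - q) = map_poly f p - map_poly f q"
  by (intro poly_eqI) (simp add: coeff_map_poly assms)

lemma map_poly_mult_hom:
  fixes f :: "'a::comm_ring_1 \<Rightarrow> 'b::comm_ring_1"
  assumes "f 0 = 0" "\<And>a b. f (a + b) = f a + f b" "\<And>a b. f (a * b) = f a * f b"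
  shows "map_poly f (p * q) = map_poly f p * map_poly f q"
proof (induction p)
  case 0 then show ?case by simp
next
  case (pCons a p)
  have "map_poly f (pCons a p * q) = map_poly f (smult a q + pCons 0 (p * q))" by simp
  also have "\<dots> = smult (f a) (map_poly f q) + pCons 0 (map_poly f p * map_poly f q)"
    by (simp add: map_poly_add_hom[where f=f, OF assms(1,2)] map_poly_smult[where f=f, OF assms(1,3)] map_poly_pCons[where f=f, OF assms(1)] pCons.IH assms)
  also have "\<dots> = map_poly f (pCons a p) * map_poly f q"
    by (simp add: map_poly_pCons[where f=f, OF assms(1)] assms)
  finally show ?case .
qed

lemma map_poly_power_hom:
  fixes f :: "'a::comm_ring_1 \<Rightarrow> 'b::comm_ring_1"
  assumes "f 0 = 0" "\<And>a b. f (a + b) = f a + f b" "\<And>a b. f (a * b) = f a * f b" "f 1 = 1"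
  shows "map_poly f (p ^ n) = map_poly f p ^ n"
  by (induction n) (simp_all add: map_poly_mult_hom[OF assms(1-3)] assms(4))

definition cV :: "nat \<Rightarrow> tri \<Rightarrow> int poly poly" where "cV k p = map_poly (\<lambda>q. coeff q k) p"
definition cU :: "tri \<Rightarrow> int poly poly" where "cU p = map_poly (map_poly (\<lambda>r. coeff r 0)) p"

definition xI :: "int poly poly" where "xI = [:[:0,1:]:]"
definition yO :: "int poly poly" where "yO = [:0,1:]"

lemma coeff0_hom: "coeff (p * q) 0 = coeff p 0 * coeff q 0" "coeff (p + q) 0 = coeff p 0 + coeff q 0"
  by (simp_all add: coeff_mult_0)

lemma cV0_mult: "cV 0 (p * q) = cV 0 p * cV 0 q"
  unfolding cV_def by (rule map_poly_mult_hom) (simp_all add: coeff_mult_0)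
lemma cV_add: "cV k (p + q) = cV k p + cV k q"
  unfolding cV_def by (rule map_poly_add_hom) simp_all
lemma cV_diff: "cV k (p - q) = cV k p - cV k q"
  unfolding cV_def by (rule map_poly_minus_hom) simp_all

lemma coeff_mult_1: "coeff (a * b) (Suc 0) = coeff a 0 * coeff b (Suc 0) + coeff a (Suc 0) * coeff b 0"
  by (simp add: coeff_mult)

lemma cV1_mult: "cV (Suc 0) (p * q) = cV 0 p * cV (Suc 0) q + cV (Suc 0) p * cV 0 q"
proof (rule poly_eqI)
  fix n
  have "coeff (cV (Suc 0) (p * q)) n = (\<Sum>i\<le>n. coeff (coeff p i * coeff q (n - i)) 1)"
    by (simp add: cV_def coeff_map_poly coeff_mult coeff_sum)
  also have "\<dots> = (\<Sum>i\<le>n. coeff (coeff p i) 0 * coeff (coeff q (n - i)) 1)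
      + (\<Sum>i\<le>n. coeff (coeff p i) 1 * coeff (coeff q (n - i)) 0)"
    by (simp add: coeff_mult_1 sum.distrib)
  also have "\<dots> = coeff (cV 0 p * cV (Suc 0) q + cV (Suc 0) p * cV 0 q) n"
    by (simp add: coeff_mult cV_def coeff_map_poly)
  finally show "coeff (cV (Suc 0) (p * q)) n = coeff (cV 0 p * cV (Suc 0) q + cV (Suc 0) p * cV 0 q) n" .
qed

lemma cU_mult: "cU (p * q) = cU p * cU q"
  unfolding cU_def
  apply (rule map_poly_mult_hom)
  apply simp
  apply (rule map_poly_add_hom; simp)
  apply (rule map_poly_mult_hom; simp add: coeff_mult_0)
  done
lemma cU_add: "cU (p + q) = cU p + cU q"
  unfolding cU_def by (rule map_poly_add_hom) (simp_all add: map_poly_add_hom)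
lemma cU_diff: "cU (p - q) = cU p - cU q"
  unfolding cU_def by (rule map_poly_minus_hom) (simp_all add: map_poly_minus_hom)


abbreviation tt :: "int poly poly" where "tt \<equiv> xI + yO"

definition sP :: tri where "sP = varU + varV + varW"
definition mon :: "nat \<times> nat \<Rightarrow> tri" where
  "mon \<rho> = varU ^ fst \<rho> * varV ^ snd \<rho> * varW ^ (fst \<rho> + snd \<rho>)"

lemma varW_pow: "varW ^ n = monom 1 n"
  by (simp add: varW_def yO_def monom_altdef)

lemma sP_eq: "sP = pCons tt 1"
  by (simp add: sP_def varU_def xI_def varV_def yO_def varW_def yO_def one_pCons)

lemma coeff_sP_mult_0: "coeff (sP * X) 0 = tt * coeff X 0"
  by (simp add: sP_eq)
lemma coeff_sP_mult_Suc: "coeff (sP * X) (Suc k) = tt * coeff X (Suc k) + coeff X k"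
  by (simp add: sP_eq)

lemma const_pow: "[:a:] ^ n = [:a ^ n:]"
  by (induction n) (simp_all add: one_pCons mult.commute)

lemma coeff_UV: "coeff (varU ^ a * varV ^ b) k = (if k = 0 then xI ^ a * yO ^ b else 0)"
proof -
  have "varU ^ a * varV ^ b = [: xI ^ a * yO ^ b :]"
    by (simp add: varU_def xI_def varV_def yO_def const_pow)
  then show ?thesis by (simp add: coeff_pCons split: nat.split)
qed

lemma coeff_mono_mult: "coeff (mon \<rho> * C) k =
   (if k < fst \<rho> + snd \<rho> then 0 else xI ^ fst \<rho> * yO ^ snd \<rho> * coeff C (k - (fst \<rho> + snd \<rho>)))"
proof -
  have e: "varU ^ fst \<rho> * varV ^ snd \<rho> = [: xI ^ fst \<rho> * yO ^ snd \<rho> :]"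
    by (simp add: varU_def xI_def varV_def yO_def const_pow)
  have "mon \<rho> * C = monom 1 (fst \<rho> + snd \<rho>) * smult (xI ^ fst \<rho> * yO ^ snd \<rho>) C"
    unfolding mon_def varW_pow e[symmetric] by (simp add: mult_ac varU_def xI_def varV_def yO_def const_pow)
  then show ?thesis
    by (simp add: coeff_monom_mult)
qed

lemma cV_varU: "cV 0 varU = xI" "cV (Suc 0) varU = 0"
  by (simp_all add: cV_def varU_def xI_def map_poly_pCons)
lemma cV_varV: "cV 0 varV = 0" "cV (Suc 0) varV = 1"
  by (simp_all add: cV_def varV_def yO_def one_pCons map_poly_pCons)
lemma cV_varW: "cV 0 varW = yO" "cV (Suc 0) varW = 0"
  by (simp_all add: cV_def varW_def yO_def one_pCons map_poly_pCons)
lemma cV_1: "cV 0 1 = 1" "cV (Suc 0) 1 = 0"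
  by (simp_all add: cV_def one_pCons map_poly_pCons)

lemma cV0_power: "cV 0 (p ^ n) = cV 0 p ^ n"
  by (induction n) (simp_all add: cV0_mult cV_1)
lemma cV1_power: "cV (Suc 0) (p ^ Suc n) = of_nat (Suc n) * cV 0 p ^ n * cV (Suc 0) p"
proof (induction n)
  case 0 then show ?case by simp
next
  case (Suc n)
  have "cV (Suc 0) (p ^ Suc (Suc n)) = cV (Suc 0) (p * p ^ Suc n)" by (simp only: power_Suc)
  also have "\<dots> = cV 0 p * cV (Suc 0) (p ^ Suc n) + cV (Suc 0) p * cV 0 (p ^ Suc n)" by (rule cV1_mult)
  also have "\<dots> = of_nat (Suc (Suc n)) * cV 0 p ^ Suc n * cV (Suc 0) p"
    unfolding Suc.IH cV0_power by (simp add: algebra_simps)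
  finally show ?case .
qed

lemma cV_sP: "cV 0 sP = tt" "cV (Suc 0) sP = 1"
  by (simp_all add: sP_def cV_add cV_varU cV_varV cV_varW)

lemma cV0_mono: "cV 0 (mon \<rho>) = (if snd \<rho> = 0 then xI ^ fst \<rho> * yO ^ (fst \<rho> + snd \<rho>) else 0)"
  by (simp add: mon_def cV0_mult cV0_power cV_varU cV_varV cV_varW)

lemma cV1_pow0: "cV (Suc 0) (p ^ n) = (if n = 0 then 0 else of_nat n * cV 0 p ^ (n - 1) * cV (Suc 0) p)"
proof (cases n)
  case 0 then show ?thesis by (simp add: cV_1)
next
  case (Suc m) then show ?thesis by (subst Suc, subst cV1_power) simp
qed

lemma cV1_mono: "cV (Suc 0) (mon \<rho>) = (if snd \<rho> = 1 then xI ^ fst \<rho> * yO ^ (fst \<rho> + snd \<rho>) else 0)"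
  by (simp add: mon_def cV1_mult cV0_mult cV0_power cV1_pow0 cV_varU cV_varV cV_varW)

lemma cU_vars: "cU varU = 0" "cU varV = xI" "cU varW = yO" "cU 1 = 1"
  by (simp_all add: cU_def varU_def xI_def varV_def yO_def varW_def yO_def one_pCons map_poly_pCons)
lemma cU_power: "cU (p ^ n) = cU p ^ n"
  by (induction n) (simp_all add: cU_mult cU_vars)
lemma cU_sP: "cU sP = tt"
  by (simp add: sP_def cU_add cU_vars)
lemma cU_mono: "cU (mon \<rho>) = (if fst \<rho> = 0 then xI ^ snd \<rho> * yO ^ snd \<rho> else 0)"
  by (simp add: mon_def cU_mult cU_power cU_vars)

lemma step_coeffs:
  assumes N: "N = sP * A * B - mon \<rho> * C" and n1: "fst \<rho> + snd \<rho> \<ge> 1" and r2: "snd \<rho> \<ge> 1"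
  shows "coeff N 0 = tt * coeff A 0 * coeff B 0"
    and "coeff N (Suc 0) = tt * (coeff A 0 * coeff B (Suc 0) + coeff A (Suc 0) * coeff B 0) + coeff A 0 * coeff B 0
           - (if fst \<rho> + snd \<rho> = 1 then xI ^ fst \<rho> * yO ^ snd \<rho> * coeff C 0 else 0)"
    and "coeff N 2 = tt * (coeff A 0 * coeff B 2 + coeff A (Suc 0) * coeff B (Suc 0) + coeff A 2 * coeff B 0)
           + (coeff A 0 * coeff B (Suc 0) + coeff A (Suc 0) * coeff B 0)
           - (if fst \<rho> + snd \<rho> = 1 then xI ^ fst \<rho> * yO ^ snd \<rho> * coeff C (Suc 0)
              else if fst \<rho> + snd \<rho> = 2 then xI ^ fst \<rho> * yO ^ snd \<rho> * coeff C 0 else 0)"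
    and "cV 0 N = tt * cV 0 A * cV 0 B"
    and "cV (Suc 0) N = cV 0 A * cV 0 B + tt * (cV 0 A * cV (Suc 0) B + cV (Suc 0) A * cV 0 B)
           - (if snd \<rho> = 1 then xI ^ fst \<rho> * yO ^ (fst \<rho> + snd \<rho>) * cV 0 C else 0)"
    and "cU N = tt * cU A * cU B - (if fst \<rho> = 0 then xI ^ snd \<rho> * yO ^ snd \<rho> * cU C else 0)"
proof -
  have m: "sP * A * B = sP * (A * B)" by (simp add: mult_ac)
  have n2: "(2::nat) = Suc (Suc 0)" by simp
  show "coeff N 0 = tt * coeff A 0 * coeff B 0"
    using n1 unfolding N m coeff_diff coeff_sP_mult_0 coeff_mono_mult by (simp add: coeff_mult_0 mult_ac)
  show "coeff N (Suc 0) = tt * (coeff A 0 * coeff B (Suc 0) + coeff A (Suc 0) * coeff B 0) + coeff A 0 * coeff B 0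
           - (if fst \<rho> + snd \<rho> = 1 then xI ^ fst \<rho> * yO ^ snd \<rho> * coeff C 0 else 0)"
    using n1 unfolding N m coeff_diff coeff_sP_mult_Suc coeff_mono_mult by (simp add: coeff_mult_0 coeff_mult_1)
  show "coeff N 2 = tt * (coeff A 0 * coeff B 2 + coeff A (Suc 0) * coeff B (Suc 0) + coeff A 2 * coeff B 0)
           + (coeff A 0 * coeff B (Suc 0) + coeff A (Suc 0) * coeff B 0)
           - (if fst \<rho> + snd \<rho> = 1 then xI ^ fst \<rho> * yO ^ snd \<rho> * coeff C (Suc 0)
              else if fst \<rho> + snd \<rho> = 2 then xI ^ fst \<rho> * yO ^ snd \<rho> * coeff C 0 else 0)"
    using n1 unfolding N m coeff_diff n2 coeff_sP_mult_Suc coeff_mono_mult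
    by (auto simp add: coeff_mult_0 coeff_mult_1 coeff_mult atMost_Suc)
  show "cV 0 N = tt * cV 0 A * cV 0 B"
    using r2 by (simp add: N cV_diff cV0_mult cV_sP cV0_mono)
  show "cV (Suc 0) N = cV 0 A * cV 0 B + tt * (cV 0 A * cV (Suc 0) B + cV (Suc 0) A * cV 0 B)
           - (if snd \<rho> = 1 then xI ^ fst \<rho> * yO ^ (fst \<rho> + snd \<rho>) * cV 0 C else 0)"
    using r2 by (simp add: N cV_diff cV0_mult cV1_mult cV_sP cV0_mono cV1_mono algebra_simps)
  show "cU N = tt * cU A * cU B - (if fst \<rho> = 0 then xI ^ snd \<rho> * yO ^ snd \<rho> * cU C else 0)"
    by (simp add: N cU_diff cU_mult cU_sP cU_mono)
qed


definition F1 :: "'a::comm_ring_1 \<Rightarrow> 'a \<Rightarrow> nat \<Rightarrow> nat \<Rightarrow> 'a" where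
  "F1 x T a b = (of_nat a - 1) * T + (of_nat b - of_nat a) * x"
definition F2 :: "'a::comm_ring_1 \<Rightarrow> 'a \<Rightarrow> nat \<Rightarrow> nat \<Rightarrow> 'a" where
  "F2 x T a b = (of_nat a - 1) * (of_nat a - 2) * T^2 + 2 * (of_nat a * (of_nat b - of_nat a) - of_nat a) * x * T
     + ((of_nat b - of_nat a)^2 + 5 * of_nat a - 3 * of_nat b) * x^2"
definition G1 :: "'a::comm_ring_1 \<Rightarrow> 'a \<Rightarrow> nat \<Rightarrow> nat \<Rightarrow> 'a" where
  "G1 x T a b = (3 * of_nat a - 1) * T + (of_nat b - 2 * of_nat a) * x"

definition gT0 :: "'a::comm_ring_1 \<Rightarrow> 'a \<Rightarrow> nat \<Rightarrow> nat \<Rightarrow> 'a \<Rightarrow> bool" where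
  "gT0 x y a b c \<longleftrightarrow> c = (x + y) ^ (a + b - 1)"
definition gT1 :: "'a::comm_ring_1 \<Rightarrow> 'a \<Rightarrow> nat \<Rightarrow> nat \<Rightarrow> 'a \<Rightarrow> bool" where
  "gT1 x y a b c \<longleftrightarrow> (x + y) ^ 3 * c = (x + y) ^ (a + b) * F1 x (x + y) a b"
definition gT2 :: "'a::comm_ring_1 \<Rightarrow> 'a \<Rightarrow> nat \<Rightarrow> nat \<Rightarrow> 'a \<Rightarrow> bool" where
  "gT2 x y a b c \<longleftrightarrow> 2 * (x + y) ^ 5 * c = (x + y) ^ (a + b) * F2 x (x + y) a b"
definition gV0 :: "'a::comm_ring_1 \<Rightarrow> 'a \<Rightarrow> nat \<Rightarrow> nat \<Rightarrow> 'a \<Rightarrow> bool" where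
  "gV0 x y a b c \<longleftrightarrow> c = x ^ a * (x + y) ^ (b - 1)"
definition gV1 :: "'a::comm_ring_1 \<Rightarrow> 'a \<Rightarrow> nat \<Rightarrow> nat \<Rightarrow> 'a \<Rightarrow> bool" where
  "gV1 x y a b c \<longleftrightarrow> (x + y) ^ 3 * c = x ^ a * (x + y) ^ b * G1 x (x + y) a b"
definition gU0 :: "'a::comm_ring_1 \<Rightarrow> 'a \<Rightarrow> nat \<Rightarrow> nat \<Rightarrow> 'a \<Rightarrow> bool" where
  "gU0 x y a b c \<longleftrightarrow> c = x ^ b * (x + y) ^ (a - 1)"

lemma pow_pred: "n \<ge> 1 \<Longrightarrow> (T::'a::monoid_mult) * T ^ (n - 1) = T ^ n"
  by (cases n) auto

lemma T0_step:
  fixes x y :: "'a::idom"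
  assumes "p1 + p2 \<ge> 1" "gT0 x y p1 p2 a0" "gT0 x y (p1+q1) (p2+q2) b0" "x + y \<noteq> 0"
  shows "gT0 x y (2*p1+q1) (2*p2+q2) ((x+y) * a0 * b0)"
proof -
  define T where "T = x + y"
  have "T * a0 = T ^ (p1+p2)" using assms(2) pow_pred[of "p1+p2" T] assms(1)
    unfolding gT0_def T_def[symmetric] by simp
  moreover have "T * b0 = T ^ (p1+q1+(p2+q2))" using assms(3) pow_pred[of "p1+q1+(p2+q2)" T] assms(1)
    unfolding gT0_def T_def[symmetric] by simp
  ultimately have "T * (T * a0 * b0) = T ^ (p1+p2) * T ^ (p1+q1+(p2+q2))"
    by (metis mult.assoc mult.commute)
  also have "\<dots> = T ^ (2*p1+q1+(2*p2+q2))" unfolding power_add[symmetric]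
    by (rule arg_cong[where f="\<lambda>n. T^n"]) simp
  also have "\<dots> = T * T ^ (2*p1+q1+(2*p2+q2) - 1)"
    using pow_pred[of "2*p1+q1+(2*p2+q2)" T] assms(1) by simp
  finally have "T * (T * a0 * b0) = T * T ^ (2*p1+q1+(2*p2+q2) - 1)" .
  moreover have "T \<noteq> 0" using assms(4) T_def by simp
  ultimately show ?thesis unfolding gT0_def T_def[symmetric] by simp
qed

lemma powsum: "a + b = c \<Longrightarrow> (T::'a::monoid_mult) ^ a * T ^ b = T ^ c"
  by (simp add: power_add[symmetric])

lemma T2_gen:
  fixes x y :: "'a::idom"
  assumes nz: "x + y \<noteq> 0" and n1: "p1 + p2 \<ge> 1"
    and A0: "gT0 x y p1 p2 a0" and A1: "gT1 x y p1 p2 a1" and A2: "gT2 x y p1 p2 a2"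
    and B0: "gT0 x y (p1+q1) (p2+q2) b0" and B1: "gT1 x y (p1+q1) (p2+q2) b1"
    and B2: "gT2 x y (p1+q1) (p2+q2) b2"
  shows "gT2 x y (2*p1+q1) (2*p2+q2) ((x+y) * (a0 * b2 + a1 * b1 + a2 * b0) + (a0 * b1 + a1 * b0))"
proof -
  define T where "T = x + y"
  define A where "A = T ^ (p1 + p2)"
  define B where "B = T ^ (p1 + q1 + (p2 + q2))"
  have TN: "T \<noteq> 0" using nz T_def by simp
  have ta0: "T * a0 = A" using A0 unfolding gT0_def A_def T_def[symmetric]
    using pow_pred[of "p1+p2" T] n1 by simp
  have tb0: "T * b0 = B" using B0 unfolding gT0_def B_def T_def[symmetric]
    using pow_pred[of "p1+q1+(p2+q2)" T] n1 by simp
  have ta1: "T^3 * a1 = A * F1 x T p1 p2" using A1 unfolding gT1_def T_def[symmetric] A_def .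
  have tb1: "T^3 * b1 = B * F1 x T (p1+q1) (p2+q2)" using B1 unfolding gT1_def T_def[symmetric] B_def .
  have ta2: "2 * T^5 * a2 = A * F2 x T p1 p2" using A2 unfolding gT2_def T_def[symmetric] A_def .
  have tb2: "2 * T^5 * b2 = B * F2 x T (p1+q1) (p2+q2)" using B2 unfolding gT2_def T_def[symmetric] B_def .
  have AB: "A * B = T ^ (2*p1+q1+(2*p2+q2))" unfolding A_def B_def by (rule powsum) simp
  have F: "F2 x T (p1+q1) (p2+q2) + 2 * F1 x T p1 p2 * F1 x T (p1+q1) (p2+q2) + F2 x T p1 p2
      + 2 * T * F1 x T (p1+q1) (p2+q2) + 2 * T * F1 x T p1 p2 = F2 x T (2*p1+q1) (2*p2+q2)"
    unfolding F1_def F2_def by (simp add: algebra_simps power2_eq_square)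
  have "T^4 * (2 * T^5 * (T * (a0 * b2 + a1 * b1 + a2 * b0) + (a0 * b1 + a1 * b0)))
     = (T*a0)*(2*T^5*b2)*T^4 + 2*(T^3*a1)*(T^3*b1)*T^4 + (2*T^5*a2)*(T*b0)*T^4
       + 2*(T*a0)*(T^3*b1)*T^5 + 2*(T^3*a1)*(T*b0)*T^5"
    by algebra
  also have "\<dots> = T^4 * (A * B * (F2 x T (p1+q1) (p2+q2) + 2 * F1 x T p1 p2 * F1 x T (p1+q1) (p2+q2) + F2 x T p1 p2
      + 2 * T * F1 x T (p1+q1) (p2+q2) + 2 * T * F1 x T p1 p2))"
    unfolding ta0 tb0 ta1 tb1 ta2 tb2 by algebra
  finally have "2 * T^5 * (T * (a0 * b2 + a1 * b1 + a2 * b0) + (a0 * b1 + a1 * b0)) = A * B * F2 x T (2*p1+q1) (2*p2+q2)"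
    using TN F by simp
  then show ?thesis unfolding gT2_def T_def[symmetric] AB .
qed

lemma T1_gen:
  fixes x y :: "'a::idom"
  assumes nz: "x + y \<noteq> 0" and n1: "p1 + p2 \<ge> 1"
    and A0: "gT0 x y p1 p2 a0" and A1: "gT1 x y p1 p2 a1"
    and B0: "gT0 x y (p1+q1) (p2+q2) b0" and B1: "gT1 x y (p1+q1) (p2+q2) b1"
  shows "gT1 x y (2*p1+q1) (2*p2+q2) ((x+y) * (a0 * b1 + a1 * b0) + a0 * b0)"
proof -
  define T where "T = x + y"
  define A where "A = T ^ (p1 + p2)"
  define B where "B = T ^ (p1 + q1 + (p2 + q2))"
  have TN: "T \<noteq> 0" using nz T_def by simp
  have ta0: "T * a0 = A" using A0 unfolding gT0_def A_def T_def[symmetric]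
    using pow_pred[of "p1+p2" T] n1 by simp
  have tb0: "T * b0 = B" using B0 unfolding gT0_def B_def T_def[symmetric]
    using pow_pred[of "p1+q1+(p2+q2)" T] n1 by simp
  have ta1: "T^3 * a1 = A * F1 x T p1 p2" using A1 unfolding gT1_def T_def[symmetric] A_def .
  have tb1: "T^3 * b1 = B * F1 x T (p1+q1) (p2+q2)" using B1 unfolding gT1_def T_def[symmetric] B_def .
  have AB: "A * B = T ^ (2*p1+q1+(2*p2+q2))" unfolding A_def B_def by (rule powsum) simp
  have F: "F1 x T (p1+q1) (p2+q2) + F1 x T p1 p2 + T = F1 x T (2*p1+q1) (2*p2+q2)"
    unfolding F1_def by (simp add: algebra_simps)
  have "T * (T^3 * (T * (a0 * b1 + a1 * b0) + a0 * b0))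
     = (T*a0)*(T^3*b1)*T + (T^3*a1)*(T*b0)*T + (T*a0)*(T*b0)*T^2"
    by algebra
  also have "\<dots> = T * (A * B * (F1 x T (p1+q1) (p2+q2) + F1 x T p1 p2 + T))"
    unfolding ta0 tb0 ta1 tb1 by algebra
  finally have "T^3 * (T * (a0 * b1 + a1 * b0) + a0 * b0) = A * B * F1 x T (2*p1+q1) (2*p2+q2)"
    using TN F by simp
  then show ?thesis unfolding gT1_def T_def[symmetric] AB .
qed

lemma V0_step:
  fixes x y :: "'a::idom"
  assumes nz: "x + y \<noteq> 0" and n1: "p2 \<ge> 1"
    and A0: "gV0 x y p1 p2 a0" and B0: "gV0 x y (p1+q1) (p2+q2) b0"
  shows "gV0 x y (2*p1+q1) (2*p2+q2) ((x+y) * a0 * b0)"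
proof -
  define T where "T = x + y"
  have TN: "T \<noteq> 0" using nz T_def by simp
  have ta0: "T * a0 = x^p1 * T^p2" using A0 unfolding gV0_def T_def[symmetric]
    using pow_pred[of "p2" T] n1 by (simp add: mult_ac)
  have tb0: "T * b0 = x^(p1+q1) * T^(p2+q2)" using B0 unfolding gV0_def T_def[symmetric]
    using pow_pred[of "p2+q2" T] n1 by (simp add: mult_ac)
  have "T * (T * a0 * b0) = (T * a0) * (T * b0)" by algebra
  also have "\<dots> = x^(2*p1+q1) * T^(2*p2+q2)" unfolding ta0 tb0
    using powsum[of p1 "p1+q1" "2*p1+q1" x] powsum[of p2 "p2+q2" "2*p2+q2" T]
    by (simp add: algebra_simps)
  also have "\<dots> = T * (x^(2*p1+q1) * T^(2*p2+q2 - 1))"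
    using pow_pred[of "2*p2+q2" T] n1 by (simp add: algebra_simps)
  finally show ?thesis unfolding gV0_def T_def[symmetric] using TN by simp
qed

lemma U0_gen:
  fixes x y :: "'a::idom"
  assumes nz: "x + y \<noteq> 0" and n1: "p1 \<ge> 1"
    and A0: "gU0 x y p1 p2 a0" and B0: "gU0 x y (p1+q1) (p2+q2) b0"
  shows "gU0 x y (2*p1+q1) (2*p2+q2) ((x+y) * a0 * b0)"
proof -
  define T where "T = x + y"
  have TN: "T \<noteq> 0" using nz T_def by simp
  have ta0: "T * a0 = x^p2 * T^p1" using A0 unfolding gU0_def T_def[symmetric]
    using pow_pred[of "p1" T] n1 by (simp add: mult_ac)
  have tb0: "T * b0 = x^(p2+q2) * T^(p1+q1)" using B0 unfolding gU0_def T_def[symmetric]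
    using pow_pred[of "p1+q1" T] n1 by (simp add: mult_ac)
  have "T * (T * a0 * b0) = (T * a0) * (T * b0)" by algebra
  also have "\<dots> = x^(2*p2+q2) * T^(2*p1+q1)" unfolding ta0 tb0
    using powsum[of p2 "p2+q2" "2*p2+q2" x] powsum[of p1 "p1+q1" "2*p1+q1" T]
    by (simp add: algebra_simps)
  also have "\<dots> = T * (x^(2*p2+q2) * T^(2*p1+q1 - 1))"
    using pow_pred[of "2*p1+q1" T] n1 by (simp add: algebra_simps)
  finally show ?thesis unfolding gU0_def T_def[symmetric] using TN by simp
qed

lemma V1_gen:
  fixes x y :: "'a::idom"
  assumes nz: "x + y \<noteq> 0" and n1: "p2 \<ge> 1"
    and A0: "gV0 x y p1 p2 a0" and A1: "gV1 x y p1 p2 a1"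
    and B0: "gV0 x y (p1+q1) (p2+q2) b0" and B1: "gV1 x y (p1+q1) (p2+q2) b1"
  shows "gV1 x y (2*p1+q1) (2*p2+q2) (a0 * b0 + (x+y) * (a0 * b1 + a1 * b0))"
proof -
  define T where "T = x + y"
  define A where "A = x^p1 * T ^ p2"
  define B where "B = x^(p1+q1) * T ^ (p2 + q2)"
  have TN: "T \<noteq> 0" using nz T_def by simp
  have ta0: "T * a0 = A" using A0 unfolding gV0_def T_def[symmetric] A_def
    using pow_pred[of "p2" T] n1 by (simp add: mult_ac)
  have tb0: "T * b0 = B" using B0 unfolding gV0_def T_def[symmetric] B_def
    using pow_pred[of "p2+q2" T] n1 by (simp add: mult_ac)
  have ta1: "T^3 * a1 = A * G1 x T p1 p2" using A1 unfolding gV1_def T_def[symmetric] A_def .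
  have tb1: "T^3 * b1 = B * G1 x T (p1+q1) (p2+q2)" using B1 unfolding gV1_def T_def[symmetric] B_def .
  have AB: "A * B = x^(2*p1+q1) * T ^ (2*p2+q2)" unfolding A_def B_def
    using powsum[of p1 "p1+q1" "2*p1+q1" x] powsum[of p2 "p2+q2" "2*p2+q2" T]
    by (simp add: algebra_simps)
  have F: "T + G1 x T (p1+q1) (p2+q2) + G1 x T p1 p2 = G1 x T (2*p1+q1) (2*p2+q2)"
    unfolding G1_def by (simp add: algebra_simps)
  have "T * (T^3 * (a0 * b0 + T * (a0 * b1 + a1 * b0)))
     = (T*a0)*(T*b0)*T^2 + (T*a0)*(T^3*b1)*T + (T^3*a1)*(T*b0)*T"
    by algebra
  also have "\<dots> = T * (A * B * (T + G1 x T (p1+q1) (p2+q2) + G1 x T p1 p2))"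
    unfolding ta0 tb0 ta1 tb1 by algebra
  finally have "T^3 * (a0 * b0 + T * (a0 * b1 + a1 * b0)) = A * B * G1 x T (2*p1+q1) (2*p2+q2)"
    using TN F by simp
  then show ?thesis unfolding gV1_def T_def[symmetric] AB by (simp add: mult_ac)
qed

lemma T1_s1:
  fixes x y :: "'a::idom"
  assumes nz: "x + y \<noteq> 0"
    and B0: "gT0 x y 1 (r+1) b0" and B1: "gT1 x y 1 (r+1) b1" and C0: "gT0 x y 1 r c0"
  shows "gT1 x y 1 (r+2) ((x+y) * b1 + b0 - y * c0)"
proof -
  define T where "T = x + y"
  define B where "B = T ^ (r+2)"
  have TN: "T \<noteq> 0" using nz T_def by simp
  have tb0: "T * b0 = B" using B0 unfolding gT0_def T_def[symmetric] B_def by simp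
  have tb1: "T^3 * b1 = B * F1 x T 1 (r+1)" using B1 unfolding gT1_def T_def[symmetric] B_def
    by (simp add: add.commute)
  have tc0: "T^2 * c0 = B" using C0 unfolding gT0_def T_def[symmetric] B_def
    by (simp add: power_add[symmetric] add.commute)
  have yv: "y = T - x" using T_def by simp
  have F: "T - y + F1 x T 1 (r+1) = F1 x T 1 (r+2)" unfolding F1_def yv by (simp add: algebra_simps)
  have "T * (T^3 * (T * b1 + b0 - y * c0)) = T * (T * (T^3*b1) + T^2 * (T * b0) - y * T * (T^2 * c0))"
    by algebra
  also have "\<dots> = T * (T * B * (T - y + F1 x T 1 (r+1)))" unfolding tb0 tb1 tc0 by algebra
  finally have "T^3 * (T * b1 + b0 - y * c0) = T * B * F1 x T 1 (r+2)" using TN F by simp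
  moreover have "T * B = T ^ (1 + (r+2))" unfolding B_def by simp
  ultimately show ?thesis unfolding gT1_def T_def[symmetric] by simp
qed

lemma T2_s1:
  fixes x y :: "'a::idom"
  assumes nz: "x + y \<noteq> 0"
    and B1: "gT1 x y 1 (r+1) b1" and B2: "gT2 x y 1 (r+1) b2" and C1: "gT1 x y 1 r c1"
  shows "gT2 x y 1 (r+2) ((x+y) * b2 + b1 - y * c1)"
proof -
  define T where "T = x + y"
  define B where "B = T ^ (r+2)"
  have TN: "T \<noteq> 0" using nz T_def by simp
  have tb1: "T^3 * b1 = B * F1 x T 1 (r+1)" using B1 unfolding gT1_def T_def[symmetric] B_def
    by (simp add: add.commute)
  have tb2: "2 * T^5 * b2 = B * F2 x T 1 (r+1)" using B2 unfolding gT2_def T_def[symmetric] B_def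
    by (simp add: add.commute)
  have tc1: "T * (T^3 * c1) = B * F1 x T 1 r" using C1 unfolding gT1_def T_def[symmetric] B_def
    by (simp add: add.commute)
  have yv: "y = T - x" using T_def by simp
  have F: "F2 x T 1 (r+1) + 2 * T * F1 x T 1 (r+1) - 2 * y * F1 x T 1 r = F2 x T 1 (r+2)"
    unfolding F1_def F2_def yv by (simp add: algebra_simps power2_eq_square)
  have "T * (2 * T^5 * (T * b2 + b1 - y * c1)) = T^2 * (2 * T^5 * b2) + 2 * T^3 * (T^3 * b1) - 2 * y * T^2 * (T * (T^3 * c1))"
    by algebra
  also have "\<dots> = T * (T * B * (F2 x T 1 (r+1) + 2 * T * F1 x T 1 (r+1) - 2 * y * F1 x T 1 r))"
    unfolding tb1 tb2 tc1 by algebra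
  finally have "2 * T^5 * (T * b2 + b1 - y * c1) = T * B * F2 x T 1 (r+2)" using TN F by simp
  moreover have "T * B = T ^ (1 + (r+2))" unfolding B_def by simp
  ultimately show ?thesis unfolding gT2_def T_def[symmetric] by simp
qed

lemma V1_s1:
  fixes x y :: "'a::idom"
  assumes nz: "x + y \<noteq> 0" and r: "r \<ge> 1"
    and B0: "gV0 x y 1 (r+1) b0" and B1: "gV1 x y 1 (r+1) b1" and C0: "gV0 x y 1 r c0"
  shows "gV1 x y 1 (r+2) (b0 + (x+y) * b1 - y * c0)"
proof -
  define T where "T = x + y"
  define B where "B = x * T ^ (r+1)"
  have TN: "T \<noteq> 0" using nz T_def by simp
  have tb0: "T * b0 = B" using B0 unfolding gV0_def T_def[symmetric] B_def by (simp add: mult_ac)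
  have tb1: "T^3 * b1 = B * G1 x T 1 (r+1)" using B1 unfolding gV1_def T_def[symmetric] B_def
    by simp
  have tc0: "T^2 * c0 = B" using C0 r unfolding gV0_def T_def[symmetric] B_def
    by (cases r) (simp_all add: mult_ac power2_eq_square)
  have yv: "y = T - x" using T_def by simp
  have F: "T - y + G1 x T 1 (r+1) = G1 x T 1 (r+2)" unfolding G1_def yv by (simp add: algebra_simps)
  have "T^3 * (b0 + T * b1 - y * c0) = T^2 * (T * b0) + T * (T^3 * b1) - y * T * (T^2 * c0)"
    by algebra
  also have "\<dots> = T * B * (T - y + G1 x T 1 (r+1))" unfolding tb0 tb1 tc0 by algebra
  finally have "T^3 * (b0 + T * b1 - y * c0) = T * B * G1 x T 1 (r+2)" using F by simp
  moreover have "T * B = x ^ 1 * T ^ (r+2)" unfolding B_def by simp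
  ultimately show ?thesis unfolding gV1_def T_def[symmetric] by simp
qed

lemma U0_s1:
  fixes x y :: "'a::idom"
  assumes B0: "gU0 x y 1 (r+1) b0" and C0: "gU0 x y 1 r c0"
  shows "gU0 x y 1 (r+2) ((x+y) * b0 - x * y * c0)"
  using B0 C0 unfolding gU0_def by (simp add: algebra_simps)

lemma T2_s2:
  fixes x y :: "'a::idom"
  assumes nz: "x + y \<noteq> 0"
    and B1: "gT1 x y (l+1) (l+2) b1" and B2: "gT2 x y (l+1) (l+2) b2" and C0: "gT0 x y l (l+1) c0"
  shows "gT2 x y (l+2) (l+3) ((x+y) * ((x+y) * b2) + (x+y) * b1 - x * y * c0)"
proof -
  define T where "T = x + y"
  define B where "B = T ^ ((l+1)+(l+2))"
  have TN: "T \<noteq> 0" using nz T_def by simp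
  have tb1: "T^3 * b1 = B * F1 x T (l+1) (l+2)" using B1 unfolding gT1_def T_def[symmetric] B_def
    by (simp add: add.commute)
  have tb2: "2 * T^5 * b2 = B * F2 x T (l+1) (l+2)" using B2 unfolding gT2_def T_def[symmetric] B_def
    by (simp add: add.commute)
  have tc0: "T^3 * c0 = B"
  proof -
    have "T^3 * c0 = T^3 * T^(l+(l+1)-1)" using C0 unfolding gT0_def T_def[symmetric] by simp
    also have "\<dots> = B" unfolding B_def by (rule powsum) simp
    finally show ?thesis .
  qed
  have yv: "y = T - x" using T_def by simp
  have F: "F2 x T (l+1) (l+2) + 2 * T * F1 x T (l+1) (l+2) - 2 * x * y = F2 x T (l+2) (l+3)"
    unfolding F1_def F2_def yv by (simp add: algebra_simps power2_eq_square)
  have "2 * T^5 * (T * (T * b2) + T * b1 - x * y * c0) = T^2 * (2 * T^5 * b2) + 2 * T^3 * (T^3 * b1) - 2 * x * y * T^2 * (T^3 * c0)"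
    by algebra
  also have "\<dots> = T^2 * B * (F2 x T (l+1) (l+2) + 2 * T * F1 x T (l+1) (l+2) - 2 * x * y)"
    unfolding tb1 tb2 tc0 by algebra
  finally have "2 * T^5 * (T * (T * b2) + T * b1 - x * y * c0) = T^2 * B * F2 x T (l+2) (l+3)" using F by simp
  moreover have "T^2 * B = T ^ (l+2 + (l+3))" unfolding B_def by (rule powsum) simp
  ultimately show ?thesis unfolding gT2_def T_def[symmetric] by simp
qed

lemma V1_s2:
  fixes x y :: "'a::idom"
  assumes nz: "x + y \<noteq> 0"
    and B0: "gV0 x y (l+1) (l+2) b0" and B1: "gV1 x y (l+1) (l+2) b1" and C0: "gV0 x y l (l+1) c0"
  shows "gV1 x y (l+2) (l+3) (x * b0 + (x+y) * (x * b1 + 1 * b0) - x * y^2 * c0)"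
proof -
  define T where "T = x + y"
  define B where "B = x^(l+1) * T ^ (l+2)"
  have TN: "T \<noteq> 0" using nz T_def by simp
  have tb0: "T * b0 = B" using B0 unfolding gV0_def T_def[symmetric] B_def by (simp add: mult_ac)
  have tb1: "T^3 * b1 = B * G1 x T (l+1) (l+2)" using B1 unfolding gV1_def T_def[symmetric] B_def .
  have tc0: "x * T^2 * c0 = B" using C0 unfolding gV0_def T_def[symmetric] B_def
    by (simp add: mult_ac power2_eq_square)
  have yv: "y = T - x" using T_def by simp
  have F: "x * T + x * G1 x T (l+1) (l+2) + T^2 - y^2 = x * G1 x T (l+2) (l+3)"
    unfolding G1_def yv by (simp add: algebra_simps power2_eq_square)
  have "T^3 * (x * b0 + T * (x * b1 + 1 * b0) - x * y^2 * c0) = x * T^2 * (T * b0) + T * x * (T^3 * b1) + T^3 * (T * b0) - y^2 * T * (x * T^2 * c0)"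
    by algebra
  also have "\<dots> = T * B * (x * T + x * G1 x T (l+1) (l+2) + T^2 - y^2)"
    unfolding tb0 tb1 tc0 by algebra
  finally have "T^3 * (x * b0 + T * (x * b1 + 1 * b0) - x * y^2 * c0) = x * T * B * G1 x T (l+2) (l+3)" using F
    by (simp add: mult_ac)
  moreover have "x * T * B = x^(l+2) * T ^ (l+3)"
  proof -
    have "x * T * B = (x * x^(l+1)) * (T * T^(l+2))" unfolding B_def by (simp add: mult_ac)
    also have "\<dots> = x^(Suc (l+1)) * T^(Suc (l+2))" by (simp only: power_Suc)
    finally have e: "x * T * B = x^(Suc (l+1)) * T^(Suc (l+2))" .
    have "Suc (l+1) = l+2" "Suc (l+2) = l+3" by simp_all
    with e show ?thesis by (simp only:)
  qed
  ultimately show ?thesis unfolding gV1_def T_def[symmetric] by (simp only:)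
qed


definition Good :: "tri \<Rightarrow> nat \<times> nat \<Rightarrow> bool" where
  "Good P \<rho> \<longleftrightarrow> (\<rho> = (0,1) \<longrightarrow> P = 1) \<and> (\<rho> = (1,1) \<longrightarrow> P = varU + varV)
     \<and> gT0 xI yO (fst \<rho>) (snd \<rho>) (coeff P 0) \<and> gV0 xI yO (fst \<rho>) (snd \<rho>) (cV 0 P)
     \<and> (\<rho> \<noteq> (0,1) \<longrightarrow> gT1 xI yO (fst \<rho>) (snd \<rho>) (coeff P (Suc 0)) \<and> gU0 xI yO (fst \<rho>) (snd \<rho>) (cU P))
     \<and> (\<rho> \<noteq> (0,1) \<and> \<rho> \<noteq> (1,1) \<longrightarrow> gT2 xI yO (fst \<rho>) (snd \<rho>) (coeff P 2) \<and> gV1 xI yO (fst \<rho>) (snd \<rho>) (cV (Suc 0) P))"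

lemma tt_nz: "tt \<noteq> 0"
proof
  assume "tt = 0"
  then have "coeff tt 1 = 0" by simp
  then show False by (simp add: xI_def yO_def)
qed

lemma coeff_UV_vals: "coeff (varU + varV) 0 = tt" "coeff (varU + varV) (Suc 0) = 0" "coeff (varU + varV) 2 = 0"
  by (simp_all add: varU_def xI_def varV_def yO_def numeral_2_eq_2)
lemma cV_UV_vals: "cV 0 (varU + varV) = xI" "cV (Suc 0) (varU + varV) = 1"
  by (simp_all add: cV_add cV_varU cV_varV)
lemma cU_UV_vals: "cU (varU + varV) = xI"
  by (simp add: cU_add cU_vars)

lemma Good_11: "Good (varU + varV) (1,1)"
  unfolding Good_def gT0_def gT1_def gT2_def gV0_def gV1_def gU0_def F1_def
  by (simp add: coeff_UV_vals cV_UV_vals cU_UV_vals del: coeff_add)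

lemma Good_01: "Good 1 (0,1)"
  unfolding Good_def gT0_def gV0_def
  by (simp add: cV_1)

lemma Good_step:
  fixes p1 p2 q1 q2 :: nat
  assumes det: "q1 * p2 = p1 * q2 + 1 \<or> p1 * q2 = q1 * p2 + 1"
    and le: "p1 \<le> p2" "q1 \<le> q2"
    and GX: "Good PX (p1,p2)" and GY: "Good PY (q1,q2)" and GM: "Good PM (p1+q1, p2+q2)"
  shows "Good (sP * PX * PM - mon (p1,p2) * PY) (2*p1+q1, 2*p2+q2)"
proof -
  define N where "N = sP * PX * PM - mon (p1,p2) * PY"
  have q2: "q2 \<ge> 1" using det le by (cases q2) auto
  have p2: "p2 \<ge> 1" using det le by (cases p2) auto
  have Mg: "(p1+q1, p2+q2) \<noteq> (0,1)" "(p1+q1, p2+q2) \<noteq> (1,1)" using p2 q2 by auto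
  have GM': "gT0 xI yO (p1+q1) (p2+q2) (coeff PM 0)" "gV0 xI yO (p1+q1) (p2+q2) (cV 0 PM)"
    "gT1 xI yO (p1+q1) (p2+q2) (coeff PM (Suc 0))" "gU0 xI yO (p1+q1) (p2+q2) (cU PM)"
    "gT2 xI yO (p1+q1) (p2+q2) (coeff PM 2)" "gV1 xI yO (p1+q1) (p2+q2) (cV (Suc 0) PM)"
    using GM Mg unfolding Good_def by auto
  have GY': "gT0 xI yO q1 q2 (coeff PY 0)" "gV0 xI yO q1 q2 (cV 0 PY)"
    using GY unfolding Good_def by auto
  have GX': "gT0 xI yO p1 p2 (coeff PX 0)" "gV0 xI yO p1 p2 (cV 0 PX)"
    using GX unfolding Good_def by auto
  have SC: "coeff N 0 = tt * coeff PX 0 * coeff PM 0"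
    "coeff N (Suc 0) = tt * (coeff PX 0 * coeff PM (Suc 0) + coeff PX (Suc 0) * coeff PM 0) + coeff PX 0 * coeff PM 0
           - (if p1 + p2 = 1 then xI ^ p1 * yO ^ p2 * coeff PY 0 else 0)"
    "coeff N 2 = tt * (coeff PX 0 * coeff PM 2 + coeff PX (Suc 0) * coeff PM (Suc 0) + coeff PX 2 * coeff PM 0)
           + (coeff PX 0 * coeff PM (Suc 0) + coeff PX (Suc 0) * coeff PM 0)
           - (if p1 + p2 = 1 then xI ^ p1 * yO ^ p2 * coeff PY (Suc 0)
              else if p1 + p2 = 2 then xI ^ p1 * yO ^ p2 * coeff PY 0 else 0)"
    "cV 0 N = tt * cV 0 PX * cV 0 PM"
    "cV (Suc 0) N = cV 0 PX * cV 0 PM + tt * (cV 0 PX * cV (Suc 0) PM + cV (Suc 0) PX * cV 0 PM)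
           - (if p2 = 1 then xI ^ p1 * yO ^ (p1 + p2) * cV 0 PY else 0)"
    "cU N = tt * cU PX * cU PM - (if p1 = 0 then xI ^ p2 * yO ^ p2 * cU PY else 0)"
    using step_coeffs[OF N_def] p2 by auto
  have T0: "gT0 xI yO (2*p1+q1) (2*p2+q2) (coeff N 0)"
    unfolding SC(1) using T0_step[OF _ GX'(1) GM'(1) tt_nz] p2 by simp
  have V0: "gV0 xI yO (2*p1+q1) (2*p2+q2) (cV 0 N)"
    unfolding SC(4) using V0_step[OF tt_nz p2 GX'(2) GM'(2)] by simp
  have rest: "gT1 xI yO (2*p1+q1) (2*p2+q2) (coeff N (Suc 0)) \<and> gU0 xI yO (2*p1+q1) (2*p2+q2) (cU N)
     \<and> gT2 xI yO (2*p1+q1) (2*p2+q2) (coeff N 2) \<and> gV1 xI yO (2*p1+q1) (2*p2+q2) (cV (Suc 0) N)"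
  proof (cases "(p1,p2) = (0,1)")
    case True
    then have X: "p1 = 0" "p2 = 1" by auto
    have q1: "q1 = 1" using det X by auto
    have PX: "PX = 1" using GX True unfolding Good_def by auto
    have GY'': "gT1 xI yO q1 q2 (coeff PY (Suc 0))" "gU0 xI yO q1 q2 (cU PY)"
      using GY q1 unfolding Good_def by auto
    have c1: "coeff (1::tri) (Suc 0) = 0" "coeff (1::tri) 2 = 0" by (simp_all add: numeral_2_eq_2)
    have "gT1 xI yO 1 (q2+2) (tt * coeff PM (Suc 0) + coeff PM 0 - yO * coeff PY 0)"
      using T1_s1[OF tt_nz, of q2 "coeff PM 0" "coeff PM (Suc 0)" "coeff PY 0"] GM'(1,3) GY'(1) X q1 by simp
    then have t1: "gT1 xI yO (2*p1+q1) (2*p2+q2) (coeff N (Suc 0))"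
      using X q1 PX by (simp add: SC c1)
    have "gT2 xI yO 1 (q2+2) (tt * coeff PM 2 + coeff PM (Suc 0) - yO * coeff PY (Suc 0))"
      using T2_s1[OF tt_nz, of q2 "coeff PM (Suc 0)" "coeff PM 2" "coeff PY (Suc 0)"] GM'(3,5) GY''(1) X q1 by simp
    then have t2: "gT2 xI yO (2*p1+q1) (2*p2+q2) (coeff N 2)"
      using X q1 PX by (simp add: SC c1)
    have "gV1 xI yO 1 (q2+2) (cV 0 PM + tt * cV (Suc 0) PM - yO * cV 0 PY)"
      using V1_s1[OF tt_nz, of q2 "cV 0 PM" "cV (Suc 0) PM" "cV 0 PY"] GM'(2,6) GY'(2) X q1 le by simp
    then have v1: "gV1 xI yO (2*p1+q1) (2*p2+q2) (cV (Suc 0) N)"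
      using X q1 PX by (simp add: SC cV_1)
    have "gU0 xI yO 1 (q2+2) (tt * cU PM - xI * yO * cU PY)"
      using U0_s1[of xI yO q2 "cU PM" "cU PY"] GM'(4) GY''(2) X q1 by simp
    then have u0: "gU0 xI yO (2*p1+q1) (2*p2+q2) (cU N)"
      using X q1 PX by (simp add: SC cU_vars)
    show ?thesis using t1 t2 v1 u0 by simp
  next
    case False
    have p1: "p1 \<ge> 1" using False det le by (cases p1) auto
    show ?thesis
    proof (cases "(p1,p2) = (1,1)")
      case True
      then have X: "p1 = 1" "p2 = 1" by auto
      have q2': "q2 = q1 + 1" using det X le by auto
      have PX: "PX = varU + varV" using GX True unfolding Good_def by auto
      have GX'': "gT1 xI yO p1 p2 (coeff PX (Suc 0))" "gU0 xI yO p1 p2 (cU PX)"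
        using GX True unfolding Good_def by auto
      have t1: "gT1 xI yO (2*p1+q1) (2*p2+q2) (coeff N (Suc 0))"
        using T1_gen[OF tt_nz _ GX'(1) GX''(1) GM'(1) GM'(3)] X by (simp add: SC)
      have u0: "gU0 xI yO (2*p1+q1) (2*p2+q2) (cU N)"
        using U0_gen[OF tt_nz p1 GX''(2) GM'(4)] X by (simp add: SC)
      have "gT2 xI yO (q1+2) (q1+3) (tt * (tt * coeff PM 2) + tt * coeff PM (Suc 0) - xI * yO * coeff PY 0)"
        using T2_s2[OF tt_nz, of q1 "coeff PM (Suc 0)" "coeff PM 2" "coeff PY 0"] GM'(3,5) GY'(1) X q2' by simp
      moreover have a: "coeff PX 0 = tt" "coeff PX (Suc 0) = 0" "coeff PX 2 = 0"
        using PX coeff_UV_vals by simp_all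
      ultimately have t2: "gT2 xI yO (2*p1+q1) (2*p2+q2) (coeff N 2)"
        unfolding SC(3) a using X q2' by (simp add: eval_nat_numeral)
      have "gV1 xI yO (q1+2) (q1+3) (xI * cV 0 PM + tt * (xI * cV (Suc 0) PM + 1 * cV 0 PM) - xI * yO^2 * cV 0 PY)"
        using V1_s2[OF tt_nz, of q1 "cV 0 PM" "cV (Suc 0) PM" "cV 0 PY"] GM'(2,6) GY'(2) X q2' by simp
      moreover have b: "cV 0 PX = xI" "cV (Suc 0) PX = 1"
        using PX cV_UV_vals by simp_all
      ultimately have v1: "gV1 xI yO (2*p1+q1) (2*p2+q2) (cV (Suc 0) N)"
        unfolding SC(5) b using X q2' by (simp add: eval_nat_numeral power2_eq_square)
      show ?thesis using t1 t2 v1 u0 by simp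
    next
      case False2: False
      have lt: "p1 < p2"
      proof (rule ccontr)
        assume "\<not> p1 < p2"
        then have "p1 = p2" using le by simp
        then have "p1 dvd 1" using det
          by (metis dvd_add_right_iff dvd_triv_left dvd_triv_right)
        then show False using False2 \<open>p1 = p2\<close> by simp
      qed
      have GX'': "gT1 xI yO p1 p2 (coeff PX (Suc 0))" "gU0 xI yO p1 p2 (cU PX)"
        "gT2 xI yO p1 p2 (coeff PX 2)" "gV1 xI yO p1 p2 (cV (Suc 0) PX)"
        using GX False False2 unfolding Good_def by auto
      have t1: "gT1 xI yO (2*p1+q1) (2*p2+q2) (coeff N (Suc 0))"
        using T1_gen[OF tt_nz _ GX'(1) GX''(1) GM'(1) GM'(3)] p1 lt by (simp add: SC)
      have u0: "gU0 xI yO (2*p1+q1) (2*p2+q2) (cU N)"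
        using U0_gen[OF tt_nz p1 GX''(2) GM'(4)] p1 by (simp add: SC)
      have t2: "gT2 xI yO (2*p1+q1) (2*p2+q2) (coeff N 2)"
        using T2_gen[OF tt_nz _ GX'(1) GX''(1) GX''(3) GM'(1) GM'(3) GM'(5)] p1 lt by (simp add: SC)
      have v1: "gV1 xI yO (2*p1+q1) (2*p2+q2) (cV (Suc 0) N)"
        using V1_gen[OF tt_nz p2 GX'(2) GX''(4) GM'(2) GM'(6)] p1 lt by (simp add: SC)
      show ?thesis using t1 t2 v1 u0 by simp
    qed
  qed
  show ?thesis unfolding Good_def N_def[symmetric] using T0 V0 rest p2 by simp
qed


type_synonym st = "(nat \<times> nat) \<times> (nat \<times> nat) \<times> tri \<times> tri \<times> tri"

fun stepb :: "bool \<Rightarrow> st \<Rightarrow> st" where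
  "stepb True (L, R, pl, pr, pm) = (L, (fst L + fst R, snd L + snd R), pl, pm, sP * pl * pm - mon L * pr)"
| "stepb False (L, R, pl, pr, pm) = ((fst L + fst R, snd L + snd R), R, pm, pr, sP * pr * pm - mon R * pl)"

definition P12 :: tri where "P12 = sP * 1 * (varU + varV) - mon (0,1) * 1"
definition init :: st where "init = ((0,1), (1,1), 1, varU + varV, P12)"
definition state :: "bool list \<Rightarrow> st" where "state p = fold stepb p init"

definition Inv :: "st \<Rightarrow> bool" where
  "Inv s \<longleftrightarrow> (case s of (L, R, pl, pr, pm) \<Rightarrow>
     fst R * snd L = fst L * snd R + 1 \<and> fst L \<le> snd L \<and> fst R \<le> snd R
     \<and> Good pl L \<and> Good pr R \<and> Good pm (fst L + fst R, snd L + snd R)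
     \<and> mon R * pl^2 + pm^2 + mon L * pr^2 = sP * pl * pm * pr)"

lemma mon_add: "mon (a + c, b + d) = mon (a, b) * mon (c, d)"
  by (simp add: mon_def power_add algebra_simps)

lemma Inv_step:
  assumes "Inv s" shows "Inv (stepb b s)"
proof -
  obtain l1 l2 r1 r2 pl pr pm where s: "s = ((l1,l2),(r1,r2),pl,pr,pm)"
    by (metis prod.exhaust)
  have det: "r1 * l2 = l1 * r2 + 1" and le: "l1 \<le> l2" "r1 \<le> r2"
    and GL: "Good pl (l1,l2)" and GR: "Good pr (r1,r2)" and GM: "Good pm (l1+r1, l2+r2)"
    and I2: "mon (r1,r2) * pl^2 + pm^2 + mon (l1,l2) * pr^2 = sP * pl * pm * pr"
    using assms unfolding s Inv_def by auto
  show ?thesis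
  proof (cases b)
    case True
    have d': "(l1 + r1) * l2 = l1 * (l2 + r2) + 1" using det by (simp add: algebra_simps)
    have G: "Good (sP * pl * pm - mon (l1,l2) * pr) (2*l1+r1, 2*l2+r2)"
      by (rule Good_step[OF _ le GL GR GM]) (use det in simp)
    have e: "(2*l1+r1, 2*l2+r2) = (l1 + (l1 + r1), l2 + (l2 + r2))" by simp
    note G = G[unfolded e]
    have I2': "mon (l1+r1, l2+r2) * pl^2 + (sP * pl * pm - mon (l1,l2) * pr)^2 + mon (l1,l2) * pm^2
        = sP * pl * (sP * pl * pm - mon (l1,l2) * pr) * pm"
      unfolding mon_add using I2 by algebra
    show ?thesis using True d' le G GL GM I2' e
      by (simp add: s Inv_def)
  next
    case False
    have d': "r1 * (l2 + r2) = (l1 + r1) * r2 + 1" using det by (simp add: algebra_simps)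
    have GM': "Good pm (r1+l1, r2+l2)" using GM by (simp add: add.commute)
    have G: "Good (sP * pr * pm - mon (r1,r2) * pl) (2*r1+l1, 2*r2+l2)"
      by (rule Good_step[OF _ le(2,1) GR GL GM']) (use det in simp)
    have e: "(2*r1+l1, 2*r2+l2) = (l1 + r1 + r1, l2 + r2 + r2)" by simp
    note G = G[unfolded e]
    have I2': "mon (r1,r2) * pm^2 + (sP * pr * pm - mon (r1,r2) * pl)^2 + mon (l1+r1, l2+r2) * pr^2
        = sP * pm * (sP * pr * pm - mon (r1,r2) * pl) * pr"
      unfolding mon_add using I2 by algebra
    show ?thesis using False d' le G GR GM I2' e
      by (simp add: s Inv_def)
  qed
qed

lemma Inv_fold: "Inv s \<Longrightarrow> Inv (fold stepb p s)"
  by (induction p arbitrary: s) (simp_all add: Inv_step)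

lemma Good_P12: "Good P12 (1,2)"
proof -
  have N: "P12 = sP * 1 * (varU + varV) - mon (0,1) * 1" by (rule P12_def)
  note SC = step_coeffs[OF N]
  have c1: "coeff (1::tri) 0 = 1" "coeff (1::tri) (Suc 0) = 0" "coeff (1::tri) 2 = 0"
    by (simp_all add: numeral_2_eq_2)
  have a: "coeff (varU+varV) 0 = tt" "coeff (varU+varV) (Suc 0) = 0" "coeff (varU+varV) 2 = 0"
    using coeff_UV_vals by simp_all
  have yv: "yO = tt - xI" by simp
  have T0: "coeff P12 0 = tt^2" using SC(1) by (simp add: c1 a power2_eq_square del: coeff_add)
  have T1: "coeff P12 (Suc 0) = xI" using SC(2) by (simp add: c1 a del: coeff_add)
  have T2: "coeff P12 2 = 0" using SC(3) by (simp add: c1 a del: coeff_add)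
  have V0: "cV 0 P12 = tt * xI" using SC(4) by (simp add: cV_1 cV_UV_vals)
  have V1: "cV (Suc 0) P12 = 2 * xI" using SC(5) by (simp add: cV_1 cV_UV_vals)
  have U0: "cU P12 = xI^2" using SC(6) by (simp add: cU_vars cU_UV_vals algebra_simps power2_eq_square)
  show ?thesis unfolding Good_def gT0_def gT1_def gT2_def gV0_def gV1_def gU0_def F1_def F2_def G1_def
    using T2 by (simp add: T0 T1 V0 V1 U0 algebra_simps power2_eq_square eval_nat_numeral)
qed

lemma Inv_init: "Inv init"
proof -
  have I2: "mon (1,1) * 1^2 + P12^2 + mon (0,1) * (varU+varV)^2 = sP * 1 * P12 * (varU+varV)"
    unfolding P12_def mon_def sP_def fst_conv snd_conv by (simp add: power2_eq_square algebra_simps)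
  show ?thesis unfolding init_def Inv_def using Good_01 Good_11 Good_P12 I2 by (simp add: numeral_2_eq_2)
qed

lemma Inv_state: "Inv (state p)"
  unfolding state_def by (rule Inv_fold[OF Inv_init])


definition stL :: "st \<Rightarrow> nat \<times> nat" where "stL s = fst s"
definition stR :: "st \<Rightarrow> nat \<times> nat" where "stR s = fst (snd s)"
definition med :: "st \<Rightarrow> nat \<times> nat" where "med s = (fst (stL s) + fst (stR s), snd (stL s) + snd (stR s))"
definition pL :: "st \<Rightarrow> tri" where "pL s = fst (snd (snd s))"
definition pR :: "st \<Rightarrow> tri" where "pR s = fst (snd (snd (snd s)))"
definition pM :: "st \<Rightarrow> tri" where "pM s = snd (snd (snd (snd s)))"

definition flt :: "nat \<times> nat \<Rightarrow> nat \<times> nat \<Rightarrow> bool" where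
  "flt x y \<longleftrightarrow> fst x * snd y < fst y * snd x"

lemma flt_trans:
  assumes "flt x y" "flt y z" "snd x > 0" "snd y > 0"
  shows "flt x z"
proof -
  obtain a b c d e f where xyz: "x = (a,b)" "y = (c,d)" "z = (e,f)" by (metis prod.exhaust)
  have h1: "a * d < c * b" and h2: "c * f < e * d" using assms(1,2) xyz by (auto simp: flt_def)
  have b: "b > 0" and d: "d > 0" using assms(3,4) xyz by auto
  have "a * d * f \<le> c * b * f" using h1 by simp
  also have "\<dots> = (c * f) * b" by (simp add: mult_ac)
  also have "\<dots> < (e * d) * b" using h2 b by simp
  finally have "d * (a * f) < d * (e * b)" by (simp add: mult_ac)
  then have "a * f < e * b" using d by simp
  then show ?thesis using xyz by (simp add: flt_def)
qed

lemma Inv_facts: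
  assumes "Inv s"
  shows "fst (stR s) * snd (stL s) = fst (stL s) * snd (stR s) + 1"
    "fst (stL s) \<le> snd (stL s)" "fst (stR s) \<le> snd (stR s)"
    "snd (stL s) \<ge> 1" "snd (stR s) \<ge> 1"
    "Good (pL s) (stL s)" "Good (pR s) (stR s)" "Good (pM s) (med s)"
    "mon (stR s) * (pL s)^2 + (pM s)^2 + mon (stL s) * (pR s)^2 = sP * pL s * pM s * pR s"
proof -
  obtain L R pl pr pm where s: "s = (L, R, pl, pr, pm)" by (metis prod.exhaust)
  have d: "fst R * snd L = fst L * snd R + 1" "fst L \<le> snd L" "fst R \<le> snd R"
     "Good pl L" "Good pr R" "Good pm (fst L + fst R, snd L + snd R)"
     "mon R * pl^2 + pm^2 + mon L * pr^2 = sP * pl * pm * pr"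
    using assms unfolding s Inv_def by auto
  have "snd L \<ge> 1" using d(1) by (cases "snd L") auto
  moreover have "snd R \<ge> 1" using d(1,2,3) by (cases "snd R") auto
  ultimately show "fst (stR s) * snd (stL s) = fst (stL s) * snd (stR s) + 1"
    "fst (stL s) \<le> snd (stL s)" "fst (stR s) \<le> snd (stR s)"
    "snd (stL s) \<ge> 1" "snd (stR s) \<ge> 1"
    "Good (pL s) (stL s)" "Good (pR s) (stR s)" "Good (pM s) (med s)"
    "mon (stR s) * (pL s)^2 + (pM s)^2 + mon (stL s) * (pR s)^2 = sP * pL s * pM s * pR s"
    using d unfolding s stL_def stR_def pL_def pR_def pM_def med_def by auto
qed

lemma stepb_sel:
  "stL (stepb True s) = stL s" "stR (stepb True s) = med s"
  "stL (stepb False s) = med s" "stR (stepb False s) = stR s"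
  "pM (stepb True s) = sP * pL s * pM s - mon (stL s) * pR s"
  "pM (stepb False s) = sP * pR s * pM s - mon (stR s) * pL s"
  "pL (stepb True s) = pL s" "pR (stepb True s) = pM s"
  "pL (stepb False s) = pM s" "pR (stepb False s) = pR s"
  by (cases s; auto simp: stL_def stR_def med_def pL_def pR_def pM_def)+

lemma med_between:
  assumes "Inv s"
  shows "flt (stL s) (med s) \<and> flt (med s) (stR s)"
proof -
  note f = Inv_facts[OF assms]
  obtain l1 l2 r1 r2 where LR: "stL s = (l1,l2)" "stR s = (r1,r2)" by (metis prod.exhaust)
  have det: "r1 * l2 = l1 * r2 + 1" using f(1) LR by simp
  show ?thesis unfolding flt_def med_def LR using det by (simp add: algebra_simps)
qed

lemma desc_between:
  assumes "Inv s"
  shows "flt (stL s) (med (fold stepb p s)) \<and> flt (med (fold stepb p s)) (stR s)"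
  using assms
proof (induction p arbitrary: s)
  case Nil then show ?case using med_between by simp
next
  case (Cons b p)
  have I': "Inv (stepb b s)" by (rule Inv_step[OF Cons.prems])
  have IH: "flt (stL (stepb b s)) (med (fold stepb p (stepb b s))) \<and> flt (med (fold stepb p (stepb b s))) (stR (stepb b s))"
    by (rule Cons.IH[OF I'])
  define x where "x = med (fold stepb p (stepb b s))"
  have x2: "snd x > 0"
  proof -
    have "snd (stL (fold stepb p (stepb b s))) \<ge> 1"
      using Inv_facts(4)[OF Inv_fold[OF I']] by simp
    then show ?thesis unfolding x_def med_def by simp
  qed
  note f = Inv_facts[OF Cons.prems]
  have m2: "snd (med s) > 0" using f(4) unfolding med_def by simp
  have mb: "flt (stL s) (med s) \<and> flt (med s) (stR s)" by (rule med_between[OF Cons.prems])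
  show ?case
  proof (cases b)
    case True
    then have "flt (stL s) x" "flt x (med s)" using IH x_def by (simp_all add: stepb_sel)
    moreover have "flt x (stR s)" using flt_trans[OF \<open>flt x (med s)\<close> conjunct2[OF mb] x2 m2] .
    ultimately show ?thesis using x_def by simp
  next
    case False
    then have "flt (med s) x" "flt x (stR s)" using IH x_def by (simp_all add: stepb_sel)
    moreover have "flt (stL s) x" using flt_trans[OF conjunct1[OF mb] \<open>flt (med s) x\<close> _ m2] f(4) by simp
    ultimately show ?thesis using x_def by simp
  qed
qed

lemma flt_irrefl: "\<not> flt x x" by (simp add: flt_def)
lemma flt_asym: "flt x y \<Longrightarrow> \<not> flt y x" by (auto simp: flt_def)

lemma med_inj:
  assumes "Inv s" "med (fold stepb p s) = med (fold stepb q s)"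
  shows "p = q"
  using assms
proof (induction p arbitrary: s q)
  case Nil
  show ?case
  proof (cases q)
    case Nil then show ?thesis by simp
  next
    case (Cons c q')
    have I': "Inv (stepb c s)" by (rule Inv_step[OF Nil.prems(1)])
    have B: "flt (stL (stepb c s)) (med (fold stepb q' (stepb c s))) \<and> flt (med (fold stepb q' (stepb c s))) (stR (stepb c s))"
      by (rule desc_between[OF I'])
    have e: "med (fold stepb q' (stepb c s)) = med s" using Nil.prems(2) Cons by simp
    show ?thesis using B unfolding e by (cases c) (simp_all add: stepb_sel flt_irrefl)
  qed
next
  case (Cons b p')
  have I': "Inv (stepb b s)" by (rule Inv_step[OF Cons.prems(1)])
  have Bp: "flt (stL (stepb b s)) (med (fold stepb p' (stepb b s))) \<and> flt (med (fold stepb p' (stepb b s))) (stR (stepb b s))"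
    by (rule desc_between[OF I'])
  show ?case
  proof (cases q)
    case Nil
    have e: "med (fold stepb p' (stepb b s)) = med s" using Cons.prems(2) Nil by simp
    show ?thesis using Bp unfolding e by (cases b) (simp_all add: stepb_sel flt_irrefl)
  next
    case (Cons c q')
    note qc = this
    show ?thesis
    proof (cases "b = c")
      case True
      then have "med (fold stepb p' (stepb b s)) = med (fold stepb q' (stepb b s))"
        using Cons.prems(2) qc by simp
      then have "p' = q'" using Cons.IH[OF I'] by simp
      then show ?thesis using qc True by simp
    next
      case False
      have I'': "Inv (stepb c s)" by (rule Inv_step[OF Cons.prems(1)])
      have Bq: "flt (stL (stepb c s)) (med (fold stepb q' (stepb c s))) \<and> flt (med (fold stepb q' (stepb c s))) (stR (stepb c s))"
        by (rule desc_between[OF I''])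
      have e: "med (fold stepb p' (stepb b s)) = med (fold stepb q' (stepb c s))"
        using Cons.prems(2) qc by simp
      show ?thesis using Bp Bq False unfolding e
        by (cases b; cases c) (auto simp: stepb_sel dest: flt_asym)
    qed
  qed
qed


lemma coprime_mult_nat_one:
  fixes a e f :: nat
  assumes "coprime e f" "e = a * x" "f = a * y"
  shows "a = 1"
proof -
  have "a dvd e" "a dvd f" using assms by auto
  then have "is_unit a" using assms(1) coprime_common_divisor by blast
  then show ?thesis by simp
qed

lemma med_surj:
  assumes "Inv s" "\<alpha> \<ge> 1" "\<beta> \<ge> 1"
    "e = \<alpha> * fst (stL s) + \<beta> * fst (stR s)" "f = \<alpha> * snd (stL s) + \<beta> * snd (stR s)" "coprime e f"
  shows "\<exists>p. med (fold stepb p s) = (e, f)"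
  using assms
proof (induction "\<alpha> + \<beta>" arbitrary: s \<alpha> \<beta> rule: less_induct)
  case less
  show ?case
  proof (cases "\<alpha> = \<beta>")
    case True
    have "\<alpha> = 1"
      by (rule coprime_mult_nat_one[OF less.prems(6), of \<alpha> "fst (stL s) + fst (stR s)" "snd (stL s) + snd (stR s)"])
         (use less.prems True in \<open>simp_all add: algebra_simps\<close>)
    then have "med (fold stepb [] s) = (e, f)" using less.prems True by (simp add: med_def)
    then show ?thesis by blast
  next
    case False
    show ?thesis
    proof (cases "\<alpha> > \<beta>")
      case True
      have I': "Inv (stepb True s)" by (rule Inv_step[OF less.prems(1)])
      obtain k where k: "\<alpha> = k + \<beta>" "k \<ge> 1" using True by (metis add.commute less_imp_add_positive less_eq_Suc_le One_nat_def)
      have "\<exists>p. med (fold stepb p (stepb True s)) = (e, f)"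
        apply (rule less.hyps[of k \<beta> "stepb True s"])
        using I' k less.prems by (simp_all add: stepb_sel med_def algebra_simps)
      then obtain p where "med (fold stepb p (stepb True s)) = (e, f)" by blast
      then have "med (fold stepb (True # p) s) = (e, f)" by simp
      then show ?thesis by blast
    next
      case False2: False
      then have lt: "\<alpha> < \<beta>" using False by simp
      have I': "Inv (stepb False s)" by (rule Inv_step[OF less.prems(1)])
      obtain k where k: "\<beta> = k + \<alpha>" "k \<ge> 1" using lt by (metis add.commute less_imp_add_positive less_eq_Suc_le One_nat_def)
      have "\<exists>p. med (fold stepb p (stepb False s)) = (e, f)"
        apply (rule less.hyps[of \<alpha> k "stepb False s"])
        using I' k less.prems by (simp_all add: stepb_sel med_def algebra_simps)
      then obtain p where "med (fold stepb p (stepb False s)) = (e, f)" by blast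
      then have "med (fold stepb (False # p) s) = (e, f)" by simp
      then show ?thesis by blast
    qed
  qed
qed

lemma state_surj:
  assumes "coprime e f" "1 \<le> e" "e < f"
  shows "\<exists>p. med (state p) = (e, f)"
proof -
  have "stL init = (0,1)" "stR init = (1,1)" by (simp_all add: init_def stL_def stR_def)
  then show ?thesis unfolding state_def
    using med_surj[OF Inv_init, of "f - e" e e f] assms by simp
qed

lemma farey_unique:
  fixes m1 m2 x y x' y' :: nat
  assumes e1: "m1 * y = m2 * x + 1" and e2: "m1 * y' = m2 * x' + 1" and "y \<le> m2" "y' \<le> m2"
  shows "x = x' \<and> y = y'"
proof -
  have y1: "y \<ge> 1" using e1 by (cases y) auto
  have y1': "y' \<ge> 1" using e2 by (cases y') auto
  have i1: "int m1 * int y = int m2 * int x + 1" using e1 by (metis of_nat_add of_nat_mult of_nat_1)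
  have i2: "int m1 * int y' = int m2 * int x' + 1" using e2 by (metis of_nat_add of_nat_mult of_nat_1)
  have cop: "coprime (int m2) (int m1)"
  proof (rule coprimeI)
    fix c assume "c dvd int m2" "c dvd int m1"
    then have "c dvd int m1 * int y - int m2 * int x" by simp
    then show "is_unit c" using i1 by simp
  qed
  have "int m1 * (int y - int y') = int m2 * (int x - int x')" using i1 i2 by (simp add: algebra_simps)
  then have "int m2 dvd int m1 * (int y - int y')" by (metis dvd_triv_left)
  then have d: "int m2 dvd (int y - int y')" using cop by (simp add: coprime_dvd_mult_right_iff)
  have yy: "y = y'"
  proof (rule ccontr)
    assume "y \<noteq> y'"
    then have "int y - int y' \<noteq> 0" by simp
    from dvd_imp_le_int[OF this d] have "int m2 \<le> \<bar>int y - int y'\<bar>" by simp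
    then show False using y1 y1' assms(3,4) by linarith
  qed
  have m2: "m2 \<ge> 1" using y1 assms(3) by simp
  have "m2 * x = m2 * x'" using e1 e2[folded yy] by linarith
  then have "x = x'" using m2 by auto
  then show ?thesis using yy by simp
qed

lemma parent_unique:
  assumes "Inv s" "med s = (a + c, b + d)" "a * d = b * c + 1"
  shows "stL s = (c, d) \<and> stR s = (a, b)"
proof -
  obtain l1 l2 r1 r2 where LR: "stL s = (l1,l2)" "stR s = (r1,r2)" by (metis prod.exhaust)
  have det: "r1 * l2 = l1 * r2 + 1" using Inv_facts(1)[OF assms(1)] LR by simp
  have m: "l1 + r1 = a + c" "l2 + r2 = b + d" using assms(2) LR by (simp_all add: med_def)
  have "(a + c) * l2 = (l1 + r1) * l2" using m by simp
  also have "\<dots> = l1 * (l2 + r2) + 1" using det by (simp add: algebra_simps)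
  also have "\<dots> = (b + d) * l1 + 1" using m by (simp add: mult.commute)
  finally have "(a + c) * l2 = (b + d) * l1 + 1" .
  moreover have "(a + c) * d = (b + d) * c + 1" using assms(3) by (simp add: algebra_simps)
  moreover have "l2 \<le> b + d" "d \<le> b + d" using m by simp_all
  ultimately have "l1 = c \<and> l2 = d" using farey_unique[of "a+c" l2 "b+d" l1 d c] by simp
  then show ?thesis using LR m by simp
qed


lemma poly_map_hom:
  fixes \<phi> :: "'a::comm_ring_1 \<Rightarrow> 'b::comm_ring_1" and g :: "'c::zero \<Rightarrow> 'a"
  assumes h0: "\<phi> 0 = 0" and ha: "\<And>a b. \<phi> (a + b) = \<phi> a + \<phi> b" and hm: "\<And>a b. \<phi> (a * b) = \<phi> a * \<phi> b"
    and g0: "g 0 = 0"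
  shows "\<phi> (poly (map_poly g p) w) = poly (map_poly (\<phi> \<circ> g) p) (\<phi> w)"
proof (induction p)
  case 0 then show ?case by (simp add: h0)
next
  case (pCons a p)
  have g0': "(\<lambda>a. \<phi> (g a)) 0 = 0" using g0 h0 by simp
  show ?case using pCons.IH
    by (simp add: map_poly_pCons[where f=g, OF g0] map_poly_pCons[where f="\<lambda>a. \<phi> (g a)", OF g0'] ha hm)
qed

lemma poly_hom_facts:
  fixes g :: "'a::comm_ring_1 \<Rightarrow> 'b::comm_ring_1"
  assumes g0: "g 0 = 0" and ga: "\<And>a b. g (a + b) = g a + g b" and gm: "\<And>a b. g (a * b) = g a * g b" and g1: "g 1 = 1"
  shows "(\<lambda>p. poly (map_poly g p) w) 0 = 0"
    "\<And>p q. poly (map_poly g (p + q)) w = poly (map_poly g p) w + poly (map_poly g q) w"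
    "\<And>p q. poly (map_poly g (p * q)) w = poly (map_poly g p) w * poly (map_poly g q) w"
    "poly (map_poly g 1) w = 1"
  by (simp_all add: map_poly_add_hom[where f=g, OF g0 ga] map_poly_mult_hom[where f=g, OF g0 ga gm] g1)

context
  fixes u v w :: "'a::comm_ring_1"
begin

definition h1 :: "int poly \<Rightarrow> 'a" where "h1 r = poly (map_poly of_int r) u"
definition h2 :: "int poly poly \<Rightarrow> 'a" where "h2 q = poly (map_poly h1 q) v"

lemma h1_hom: "h1 0 = 0" "h1 (a + b) = h1 a + h1 b" "h1 (a * b) = h1 a * h1 b" "h1 1 = 1"
  unfolding h1_def by (rule poly_hom_facts; simp)+

lemma h2_hom: "h2 0 = 0" "h2 (a + b) = h2 a + h2 b" "h2 (a * b) = h2 a * h2 b" "h2 1 = 1"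
  unfolding h2_def by (rule poly_hom_facts; simp add: h1_hom)+

lemma ev3_alt: "ev3 p u v w = poly (map_poly h2 p) w"
  unfolding ev3_def h2_def h1_def ..

lemma ev3_hom: "ev3 (p + q) u v w = ev3 p u v w + ev3 q u v w"
  "ev3 (p * q) u v w = ev3 p u v w * ev3 q u v w" "ev3 1 u v w = 1" "ev3 0 u v w = 0"
  unfolding ev3_alt by (rule poly_hom_facts; simp add: h2_hom)+
end


lemma ev3_diff: "ev3 (p - q) u v w = ev3 p u v w - ev3 q u v w"
proof -
  have "ev3 p u v w = ev3 (p - q + q) u v w" by simp
  also have "\<dots> = ev3 (p - q) u v w + ev3 q u v w" by (rule ev3_hom(1))
  finally show ?thesis by simp
qed

lemma ev3_power: "ev3 (p ^ n) u v w = ev3 p u v w ^ n"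
  by (induction n) (simp_all add: ev3_hom)

lemma ev3_vars: "ev3 varU u v w = u" "ev3 varV u v w = v" "ev3 varW u v w = w"
  by (simp_all add: ev3_def varU_def varV_def varW_def map_poly_pCons)

lemma ev3_map_hom:
  fixes \<phi> :: "'a::comm_ring_1 \<Rightarrow> 'b::comm_ring_1"
  assumes h0: "\<phi> 0 = 0" and ha: "\<And>a b. \<phi> (a + b) = \<phi> a + \<phi> b" and hm: "\<And>a b. \<phi> (a * b) = \<phi> a * \<phi> b"
    and h1': "\<phi> 1 = 1"
  shows "\<phi> (ev3 p a b c) = ev3 p (\<phi> a) (\<phi> b) (\<phi> c)"
proof -
  have hminus: "\<phi> (- x) = - \<phi> x" for x
  proof -
    have "\<phi> (- x) + \<phi> x = 0" using ha[of "-x" x] h0 by simp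
    then show ?thesis by (simp add: eq_neg_iff_add_eq_0)
  qed
  have hint: "\<phi> (of_int k) = of_int k" for k
  proof (induction k rule: int_induct[of _ 0])
    case base then show ?case by (simp add: h0)
  next
    case (step1 i) then show ?case by (simp add: ha h1')
  next
    case (step2 i)
    have "\<phi> (of_int (i - 1)) = \<phi> (of_int i) + \<phi> (- 1)" using ha[of "of_int i" "-1"] by simp
    then show ?case using step2 hminus h1' by simp
  qed
  have e1: "\<phi> (h1 a r) = h1 (\<phi> a) r" for r
    unfolding h1_def by (subst poly_map_hom[OF h0 ha hm]) (simp_all add: o_def hint)
  have e2: "\<phi> (h2 a b q) = h2 (\<phi> a) (\<phi> b) q" for q
    unfolding h2_def by (subst poly_map_hom[OF h0 ha hm]) (simp_all add: o_def e1 h1_hom)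
  show ?thesis unfolding ev3_alt
    by (subst poly_map_hom[OF h0 ha hm]) (simp_all add: o_def e2 h2_hom)
qed

definition E1 :: "int poly \<Rightarrow> int poly" where "E1 r = pcompose r [:0,0,1:]"
definition E2 :: "int poly poly \<Rightarrow> int poly poly" where "E2 q = pcompose (map_poly E1 q) [:0,0,1:]"
definition E3 :: "tri \<Rightarrow> tri" where "E3 p = pcompose (map_poly E2 p) [:0,0,1:]"

lemma deg2: "degree [:0,0,1::'a::{comm_ring_1}:] = 2"
  by (simp add: degree_pCons_eq)
lemma E1_0: "E1 0 = 0" by (simp add: E1_def)
lemma E2_0: "E2 0 = 0" by (simp add: E2_def)
lemma E1_inj: "E1 r = 0 \<Longrightarrow> r = 0"
proof -
  assume h: "E1 r = 0"
  have "0 < degree [:0,0,1::int:]" by (simp add: deg2)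
  with pcompose_eq_0[OF h[unfolded E1_def]] show "r = 0" by blast
qed
lemma E2_inj: "E2 q = 0 \<Longrightarrow> q = 0"
proof -
  assume "E2 q = 0"
  then have "map_poly E1 q = 0" unfolding E2_def by (rule pcompose_eq_0) (simp add: deg2)
  then show "q = 0" by (subst (asm) map_poly_eq_0_iff) (auto simp: E1_0 dest: E1_inj)
qed
lemma E3_inj: "E3 q = 0 \<Longrightarrow> q = 0"
proof -
  assume "E3 q = 0"
  then have "map_poly E2 q = 0" unfolding E3_def by (rule pcompose_eq_0) (simp add: deg2)
  then show "q = 0" by (subst (asm) map_poly_eq_0_iff) (auto simp: E2_0 dest: E2_inj)
qed

lemma ev3_sq: "ev3 p (varU^2) (varV^2) (varW^2) = E3 p"
proof -
  define \<iota> :: "int poly \<Rightarrow> tri" where "\<iota> b = [:[:b:]:]" for b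
  define \<kappa> :: "int poly poly \<Rightarrow> tri" where "\<kappa> b = [:b:]" for b
  have ih: "\<iota> 0 = 0" "\<iota> (a + b) = \<iota> a + \<iota> b" "\<iota> (a * b) = \<iota> a * \<iota> b" for a b
    unfolding \<iota>_def by simp_all
  have kh: "\<kappa> 0 = 0" "\<kappa> (a + b) = \<kappa> a + \<kappa> b" "\<kappa> (a * b) = \<kappa> a * \<kappa> b" for a b
    unfolding \<kappa>_def by simp_all
  have u2: "varU^2 = \<iota> [:0,0,1:]" unfolding \<iota>_def varU_def by (simp add: power2_eq_square)
  have v2: "varV^2 = \<kappa> [:0,0,1:]" unfolding \<kappa>_def varV_def by (simp add: power2_eq_square)
  have w2: "varW^2 = [:0,0,1:]" unfolding varW_def by (simp add: power2_eq_square)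
  have oi: "(of_int k :: tri) = \<iota> [:k:]" for k unfolding \<iota>_def by (simp add: of_int_poly)
  have H1: "h1 (varU^2) r = \<iota> (E1 r)" for r
  proof -
    have "h1 (varU^2) r = poly (map_poly (\<lambda>k. \<iota> [:k:]) r) (\<iota> [:0,0,1:])"
      unfolding h1_def u2 oi ..
    also have "\<dots> = \<iota> (poly (map_poly (\<lambda>k. [:k:]) r) [:0,0,1:])"
      by (subst poly_map_hom[OF ih]) (simp_all add: o_def)
    finally show ?thesis by (simp add: E1_def pcompose_altdef)
  qed
  have H2: "h2 (varU^2) (varV^2) q = \<kappa> (E2 q)" for q
  proof -
    have "h2 (varU^2) (varV^2) q = poly (map_poly (\<lambda>r. \<kappa> [:E1 r:]) q) (\<kappa> [:0,0,1:])"
      unfolding h2_def v2 H1 by (simp add: \<iota>_def \<kappa>_def)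
    also have "\<dots> = \<kappa> (poly (map_poly (\<lambda>r. [:E1 r:]) q) [:0,0,1:])"
      by (subst poly_map_hom[OF kh]) (simp_all add: o_def E1_def)
    also have "\<dots> = \<kappa> (E2 q)" unfolding E2_def pcompose_altdef
      by (simp add: map_poly_map_poly E1_def o_def)
    finally show ?thesis .
  qed
  show ?thesis unfolding ev3_alt H2 w2 E3_def pcompose_altdef
    by (simp add: \<kappa>_def map_poly_map_poly E2_def E1_def o_def)
qed


definition ev :: "tri \<Rightarrow> K" where "ev P = ev3 P (Xk^2) (Yk^2) (Zk^2)"
definition Dk :: "nat \<times> nat \<Rightarrow> K" where "Dk \<rho> = Xk ^ fst \<rho> * Yk ^ snd \<rho> * Zk ^ (fst \<rho> + snd \<rho>)"
definition val :: "tri \<Rightarrow> nat \<times> nat \<Rightarrow> K" where "val P \<rho> = ev P * (Xk * Yk * Zk) / Dk \<rho>"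

lemma fr_hom: "Fract (0::tri) 1 = 0" "Fract (a + b) 1 = Fract a 1 + Fract (b::tri) 1"
  "Fract (a * b) 1 = Fract a 1 * Fract (b::tri) 1" "Fract (1::tri) 1 = 1"
  by (simp_all add: fract_collapse)

lemma fr_eq0: "Fract (a::tri) 1 = 0 \<longleftrightarrow> a = 0"
proof -
  have h: "Fract a 1 = Fract 0 1 \<longleftrightarrow> a * 1 = 0 * 1" by (rule eq_fract(1)) simp_all
  have z: "Fract (0::tri) 1 = 0" by (rule fract_collapse(1))
  show ?thesis using h unfolding z by (simp only: mult_1_right mult_zero_left)
qed

lemma ev_fr: "ev P = Fract (E3 P) 1"
proof -
  have "Fract (ev3 P (varU^2) (varV^2) (varW^2)) 1 = ev3 P (Fract (varU^2) 1) (Fract (varV^2) 1) (Fract (varW^2) 1)"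
    by (rule ev3_map_hom[where \<phi>="\<lambda>a. Fract a 1"]) (simp_all only: fr_hom)
  moreover have "Fract (varU^2) 1 = Xk^2" "Fract (varV^2) 1 = Yk^2" "Fract (varW^2) 1 = Zk^2"
    by (simp_all add: Xk_def Yk_def Zk_def power2_eq_square)
  ultimately show ?thesis by (simp add: ev_def ev3_sq)
qed

lemma ev_inj: "ev P = 0 \<Longrightarrow> P = 0"
  by (simp add: ev_fr fr_eq0 E3_inj)

lemma XYZ_nz: "Xk \<noteq> 0" "Yk \<noteq> 0" "Zk \<noteq> 0"
  by (simp_all add: Xk_def Yk_def Zk_def fr_eq0 varU_def varV_def varW_def)

lemma Dk_nz: "Dk \<rho> \<noteq> 0" by (simp add: Dk_def XYZ_nz)

lemma Dk_add: "Dk (a + c, b + d) = Dk (a, b) * Dk (c, d)"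
  by (simp add: Dk_def power_add algebra_simps)

lemma ev_hom: "ev (P + Q) = ev P + ev Q" "ev (P * Q) = ev P * ev Q" "ev (P - Q) = ev P - ev Q"
  "ev 1 = 1" "ev (P ^ n) = ev P ^ n"
  by (simp_all add: ev_def ev3_hom ev3_diff ev3_power)

lemma ev_vars: "ev varU = Xk^2" "ev varV = Yk^2" "ev varW = Zk^2"
  by (simp_all add: ev_def ev3_vars)

lemma ev_mon: "ev (mon \<rho>) = (Dk \<rho>)^2"
  by (simp add: mon_def Dk_def ev_hom ev_vars power_mult[symmetric] power_mult_distrib mult.commute)

lemma field_id:
  fixes eA eB eC eD dx dy k :: "'a::field"
  assumes "dx \<noteq> 0" "dy \<noteq> 0" "eA * eB = dx^2 * eC^2 + eD^2"
  shows "(eA * k / (dy * dy * dx)) * (eB * k / dx) = (eC * k / dy)^2 + (eD * k / (dy * dx))^2"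
proof -
  have "(eA * k / (dy * dy * dx)) * (eB * k / dx) = (eA * eB) * k^2 / (dy^2 * dx^2)"
    by (simp add: power2_eq_square field_simps)
  also have "\<dots> = (dx^2 * eC^2 + eD^2) * k^2 / (dy^2 * dx^2)" using assms(3) by simp
  also have "\<dots> = (eC * k / dy)^2 + (eD * k / (dy * dx))^2"
    using assms(1,2) by (simp add: power2_eq_square field_simps)
  finally show ?thesis .
qed

lemma val_rule:
  assumes "A * B = mon X * C^2 + D^2"
  shows "val A (fst Y + (fst Y + fst X), snd Y + (snd Y + snd X)) * val B X
     = (val C Y)^2 + (val D (fst Y + fst X, snd Y + snd X))^2"
proof -
  have d1: "Dk (fst Y + (fst Y + fst X), snd Y + (snd Y + snd X)) = Dk Y * Dk Y * Dk X"
    by (simp add: Dk_add mult_ac)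
  have d2: "Dk (fst Y + fst X, snd Y + snd X) = Dk Y * Dk X" by (simp add: Dk_add)
  have e: "ev A * ev B = (Dk X)^2 * (ev C)^2 + (ev D)^2"
    using arg_cong[OF assms, of ev] by (simp add: ev_hom ev_mon)
  show ?thesis unfolding val_def d1 d2
    by (rule field_id[OF Dk_nz Dk_nz e])
qed


definition Pat :: "nat \<times> nat \<Rightarrow> tri" where
  "Pat \<rho> = (if \<rho> = (0,1) \<or> \<rho> = (1,0) then 1 else if \<rho> = (1,1) then varU + varV
     else pM (state (SOME p. med (state p) = \<rho>)))"

definition Mval :: "nat \<times> nat \<Rightarrow> K" where
  "Mval \<rho> = (if \<rho> \<in> markov_index then val (Pat \<rho>) \<rho> else 0)"

lemma Inv_st: "Inv (state p)" by (rule Inv_state)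

lemma state_snoc: "state (p @ [b]) = stepb b (state p)"
  by (simp add: state_def)

lemma state_nil: "state [] = init" by (simp add: state_def)

lemma med_nonbase: "med (state p) \<noteq> (0,1) \<and> med (state p) \<noteq> (1,0) \<and> med (state p) \<noteq> (1,1)"
  using Inv_facts(4,5)[OF Inv_st[of p]] by (auto simp: med_def)

lemma Pat_med: "Pat (med (state p)) = pM (state p)"
proof -
  have "(SOME q. med (state q) = med (state p)) = p"
  proof (rule some_equality)
    fix q assume "med (state q) = med (state p)"
    then show "q = p" using med_inj[OF Inv_init] unfolding state_def by blast
  qed simp
  then show ?thesis using med_nonbase[of p] unfolding Pat_def by auto
qed

lemma Pat_LR: "pL (state p) = Pat (stL (state p)) \<and> pR (state p) = Pat (stR (state p))"
proof (induction p rule: rev_induct)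
  case Nil
  show ?case by (simp add: state_nil init_def pL_def pR_def stL_def stR_def Pat_def)
next
  case (snoc b p)
  show ?case
  proof (cases b)
    case True
    then show ?thesis using snoc Pat_med[of p] by (simp add: state_snoc stepb_sel)
  next
    case False
    then show ?thesis using snoc Pat_med[of p] by (simp add: state_snoc stepb_sel)
  qed
qed

lemma det_coprime:
  fixes l1 l2 r1 r2 :: nat
  assumes "r1 * l2 = l1 * r2 + 1"
  shows "coprime l1 l2" "coprime r1 r2"
proof -
  show "coprime l1 l2"
  proof (rule coprimeI)
    fix c assume "c dvd l1" "c dvd l2"
    then have "c dvd r1 * l2" "c dvd l1 * r2" by simp_all
    then have "c dvd l1 * r2 + 1" using assms by simp
    then have "c dvd 1" using \<open>c dvd l1 * r2\<close> dvd_add_right_iff by blast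
    then show "is_unit c" by simp
  qed
  show "coprime r1 r2"
  proof (rule coprimeI)
    fix c assume "c dvd r1" "c dvd r2"
    then have "c dvd r1 * l2" "c dvd l1 * r2" by simp_all
    then have "c dvd l1 * r2 + 1" using assms by simp
    then have "c dvd 1" using \<open>c dvd l1 * r2\<close> dvd_add_right_iff by blast
    then show "is_unit c" by simp
  qed
qed

lemma index_facts:
  "stL (state p) \<in> markov_index" "stR (state p) \<in> markov_index" "med (state p) \<in> markov_index"
proof -
  note f = Inv_facts[OF Inv_st[of p]]
  obtain l1 l2 r1 r2 where LR: "stL (state p) = (l1,l2)" "stR (state p) = (r1,r2)" by (metis prod.exhaust)
  have det: "r1 * l2 = l1 * r2 + 1" and le: "l1 \<le> l2" "r1 \<le> r2" using f LR by simp_all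
  have det2: "r1 * (l2 + r2) = (l1 + r1) * r2 + 1" using det by (simp add: algebra_simps)
  show "stL (state p) \<in> markov_index" "stR (state p) \<in> markov_index"
    using det_coprime[OF det] le LR by (simp_all add: markov_index_def)
  show "med (state p) \<in> markov_index"
    using det_coprime(1)[OF det2] le LR by (simp add: markov_index_def med_def)
qed

lemma Good_nz: "Good P \<rho> \<Longrightarrow> P \<noteq> 0"
  unfolding Good_def gT0_def using tt_nz by auto

lemma val_nz: "P \<noteq> 0 \<Longrightarrow> val P \<rho> \<noteq> 0"
  using ev_inj XYZ_nz Dk_nz by (auto simp: val_def)

lemma Mval_pos:
  "Mval (stL (state p)) = val (pL (state p)) (stL (state p))"
  "Mval (stR (state p)) = val (pR (state p)) (stR (state p))"
  "Mval (med (state p)) = val (pM (state p)) (med (state p))"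
  using index_facts[of p] Pat_LR[of p] Pat_med[of p] by (simp_all add: Mval_def)

lemma Mval_nz:
  "Mval (stL (state p)) \<noteq> 0" "Mval (stR (state p)) \<noteq> 0"
  using Mval_pos[of p] val_nz Good_nz Inv_facts(6,7)[OF Inv_st[of p]] by auto

lemma ev_UV: "ev (varU + varV) = Xk^2 + Yk^2" by (simp add: ev_hom ev_vars)
lemma ev_sP: "ev sP = Xk^2 + Yk^2 + Zk^2" by (simp add: sP_def ev_hom ev_vars)

lemma Mval_base: "Mval (1,0) = Yk" "Mval (0,1) = Xk" "Mval (1,1) = (Xk^2 + Yk^2) / Zk"
  using XYZ_nz by (simp_all add: Mval_def markov_index_def Pat_def val_def Dk_def ev_hom ev_vars
      field_simps power2_eq_square)

lemma med_nil: "med (state []) = (1,2)" by (simp add: state_nil init_def med_def stL_def stR_def)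

lemma Mval_12: "Mval (1,2) = (Mval (0,1)^2 + Mval (1,1)^2) / Mval (1,0)"
proof -
  have "Mval (1,2) = val P12 (1,2)" using Mval_pos(3)[of "[]"] med_nil
    by (simp add: state_nil init_def pM_def)
  also have "\<dots> = ((Xk^2 + Yk^2 + Zk^2) * (Xk^2 + Yk^2) - (Yk * Zk)^2) * (Xk * Yk * Zk) / (Xk * Yk^2 * Zk^3)"
    by (simp add: val_def P12_def ev_hom ev_sP ev_UV ev_mon Dk_def eval_nat_numeral del: ev_hom(1))
  also have "\<dots> = (Xk^2 + ((Xk^2 + Yk^2) / Zk)^2) / Yk"
    using XYZ_nz by (simp add: field_simps power2_eq_square eval_nat_numeral)
  finally show ?thesis unfolding Mval_base .
qed

lemma Mval_rule:
  assumes ab: "(a, b) \<in> markov_index" and cd: "(c, d) \<in> markov_index"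
    and det: "\<bar>int a * int d - int b * int c\<bar> = 1" and le: "a + 2 * c \<le> b + 2 * d"
  shows "Mval (a + 2 * c, b + 2 * d) = (Mval (c, d)^2 + Mval (a + c, b + d)^2) / Mval (a, b)"
proof -
  have det': "a * d = b * c + 1 \<or> b * c = a * d + 1"
  proof -
    define x where "x = a * d"
    define y where "y = b * c"
    have "\<bar>int x - int y\<bar> = 1" using det by (simp add: x_def y_def)
    then have "x = y + 1 \<or> y = x + 1" by arith
    then show ?thesis by (simp add: x_def y_def)
  qed
  show ?thesis
  proof (cases "(a,b) = (1,0)")
    case True
    then have "d = 1" using det' by auto
    moreover have "c \<le> d" using cd \<open>d = 1\<close> by (auto simp: markov_index_def)
    ultimately have "c = 0" using le True by simp
    then show ?thesis using True \<open>d = 1\<close> Mval_12 by (simp add: numeral_2_eq_2)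
  next
    case False
    then have ab': "a \<le> b" "coprime a b" using ab by (auto simp: markov_index_def)
    have cd': "c \<le> d" "coprime c d"
    proof -
      show "coprime c d" using cd by (simp add: markov_index_def)
      show "c \<le> d"
      proof (rule ccontr)
        assume "\<not> c \<le> d"
        then have "(c,d) = (1,0)" using cd by (auto simp: markov_index_def)
        then have "c = 1" "d = 0" by auto
        then show False using det' le by simp
      qed
    qed
    have m1: "a + c \<ge> 1" using det' by (cases "a + c") auto
    have cop: "coprime (a + c) (b + d)"
    proof (rule coprimeI)
      fix k assume k: "k dvd a + c" "k dvd b + d"
      have "(a + c) * d = (b + d) * c + 1 \<or> (b + d) * c = (a + c) * d + 1"
        using det' by (auto simp: algebra_simps)
      then have "k dvd 1"
      proof
        assume h: "(a + c) * d = (b + d) * c + 1"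
        have "k dvd (a + c) * d" "k dvd (b + d) * c" using k by simp_all
        then show ?thesis using h dvd_add_right_iff by metis
      next
        assume h: "(b + d) * c = (a + c) * d + 1"
        have "k dvd (b + d) * c" "k dvd (a + c) * d" using k by simp_all
        then show ?thesis using h dvd_add_right_iff by metis
      qed
      then show "is_unit k" by simp
    qed
    have m11: "(a + c, b + d) \<noteq> (1, 1)"
    proof
      assume h: "(a + c, b + d) = (1, 1)"
      then have "(a = 1 \<and> c = 0 \<and> b = 1 \<and> d = 0) \<or> (a = 0 \<and> c = 1 \<and> b = 0 \<and> d = 1)"
        using ab'(1) cd'(1) by auto
      then show False using ab'(2) cd'(2) by auto
    qed
    have m2: "a + c < b + d"
    proof -
      have "a + c \<le> b + d" using ab'(1) cd'(1) by simp
      moreover have "a + c \<noteq> b + d"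
      proof
        assume "a + c = b + d"
        then have "a + c = 1" using cop by simp
        then show False using m11 \<open>a + c = b + d\<close> by simp
      qed
      ultimately show ?thesis by simp
    qed
    obtain p where p: "med (state p) = (a + c, b + d)" using state_surj[OF cop m1 m2] by blast
    define s where "s = state p"
    note f = Inv_facts[OF Inv_st[of p], folded s_def]
    show ?thesis
    proof (cases "a * d = b * c + 1")
      case True
      have LR: "stL s = (c, d)" "stR s = (a, b)"
        using parent_unique[OF Inv_st[of p] _ True] p s_def by (simp_all add: add.commute)
      have ms: "med s = (c + a, d + b)" using LR by (simp add: med_def)
      have new: "med (state (p @ [True])) = (a + 2 * c, b + 2 * d)"
        by (simp add: state_snoc s_def[symmetric] med_def stepb_sel LR)
      have A: "(sP * pL s * pM s - mon (stL s) * pR s) * pR s = mon (stR s) * (pL s)^2 + (pM s)^2"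
        using f(9) by algebra
      have V: "val (sP * pL s * pM s - mon (stL s) * pR s) (c + (c + a), d + (d + b)) * val (pR s) (a, b)
         = (val (pL s) (c, d))^2 + (val (pM s) (c + a, d + b))^2"
        using val_rule[where Y="(c,d)", OF A[unfolded LR]] LR by simp
      have pe: "(c + (c + a), d + (d + b)) = (a + 2 * c, b + 2 * d)" by simp
      note V = V[unfolded pe]
      have e1: "Mval (a + 2 * c, b + 2 * d) = val (sP * pL s * pM s - mon (stL s) * pR s) (a + 2 * c, b + 2 * d)"
        using Mval_pos(3)[of "p @ [True]"] unfolding new unfolding state_snoc s_def[symmetric] stepb_sel .
      have e2: "Mval (a, b) = val (pR s) (a, b)" "Mval (c, d) = val (pL s) (c, d)"
        "Mval (a + c, b + d) = val (pM s) (c + a, d + b)"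
        using Mval_pos[of p] LR ms p by (simp_all add: s_def[symmetric] add.commute)
      have nz: "Mval (a, b) \<noteq> 0" using Mval_nz(2)[of p] LR by (simp add: s_def[symmetric])
      show ?thesis using V nz unfolding e1 e2 by (simp add: field_simps)
    next
      case False
      then have det2: "c * b = d * a + 1" using det' by (simp add: mult.commute)
      have LR: "stL s = (a, b)" "stR s = (c, d)"
        using parent_unique[OF Inv_st[of p] _ det2] p s_def by (simp_all add: add.commute)
      have ms: "med s = (a + c, b + d)" using LR by (simp add: med_def)
      have new: "med (state (p @ [False])) = (a + 2 * c, b + 2 * d)"
        by (simp add: state_snoc s_def[symmetric] med_def stepb_sel LR)
      have A: "(sP * pR s * pM s - mon (stR s) * pL s) * pL s = mon (stL s) * (pR s)^2 + (pM s)^2"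
        using f(9) by algebra
      have V: "val (sP * pR s * pM s - mon (stR s) * pL s) (c + (c + a), d + (d + b)) * val (pL s) (a, b)
         = (val (pR s) (c, d))^2 + (val (pM s) (c + a, d + b))^2"
        using val_rule[where Y="(c,d)", OF A[unfolded LR]] LR by simp
      have pe: "(c + (c + a), d + (d + b)) = (a + 2 * c, b + 2 * d)" by simp
      note V = V[unfolded pe]
      have e1: "Mval (a + 2 * c, b + 2 * d) = val (sP * pR s * pM s - mon (stR s) * pL s) (a + 2 * c, b + 2 * d)"
        using Mval_pos(3)[of "p @ [False]"] unfolding new unfolding state_snoc s_def[symmetric] stepb_sel .
      have e2: "Mval (a, b) = val (pL s) (a, b)" "Mval (c, d) = val (pR s) (c, d)"
        "Mval (a + c, b + d) = val (pM s) (c + a, d + b)"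
        using Mval_pos[of p] LR ms p by (simp_all add: s_def[symmetric] add.commute)
      have nz: "Mval (a, b) \<noteq> 0" using Mval_nz(1)[of p] LR by (simp add: s_def[symmetric])
      show ?thesis using V nz unfolding e1 e2 by (simp add: field_simps)
    qed
  qed
qed

lemma Mval_markov_rules: "markov_rules Mval"
  unfolding markov_rules_def using Mval_base Mval_rule by (simp add: power2_eq_square)


lemma rule_inst:
  assumes "markov_rules M" "(a, b) \<in> markov_index" "(c, d) \<in> markov_index"
    "a * d = b * c + 1 \<or> b * c = a * d + 1" "a + 2 * c \<le> b + 2 * d"
  shows "M (a + 2 * c, b + 2 * d) = (M (c, d)^2 + M (a + c, b + d)^2) / M (a, b)"
proof -
  have "\<bar>int a * int d - int b * int c\<bar> = 1"
  proof -
    have "int (a * d) = int (b * c + 1) \<or> int (b * c) = int (a * d + 1)" using assms(4) by metis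
    then have "int a * int d = int b * int c + 1 \<or> int b * int c = int a * int d + 1" by (simp add: add.commute)
    then show ?thesis by auto
  qed
  then show ?thesis using assms(1-3,5) unfolding markov_rules_def by blast
qed

lemma agree:
  assumes M1: "markov_rules M1" and M2: "markov_rules M2"
  shows "M1 (stL (state p)) = M2 (stL (state p)) \<and> M1 (stR (state p)) = M2 (stR (state p))
     \<and> M1 (med (state p)) = M2 (med (state p))"
proof (induction p rule: rev_induct)
  case Nil
  have b: "M1 (1,0) = M2 (1,0)" "M1 (0,1) = M2 (0,1)" "M1 (1,1) = M2 (1,1)"
    using M1 M2 unfolding markov_rules_def by simp_all
  have i: "(1::nat, 0::nat) \<in> markov_index" "(0::nat, 1::nat) \<in> markov_index" by (simp_all add: markov_index_def)
  have r1: "M1 (1 + 2 * 0, 0 + 2 * 1) = (M1 (0, 1)^2 + M1 (1 + 0, 0 + 1)^2) / M1 (1, 0)"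
    by (rule rule_inst[OF M1 i]) simp_all
  have r2: "M2 (1 + 2 * 0, 0 + 2 * 1) = (M2 (0, 1)^2 + M2 (1 + 0, 0 + 1)^2) / M2 (1, 0)"
    by (rule rule_inst[OF M2 i]) simp_all
  have e: "(1 + 2 * 0, 0 + 2 * 1) = (1::nat, 2::nat)" "(1 + 0, 0 + 1) = (1::nat, 1::nat)" by simp_all
  have "M1 (1,2) = M2 (1,2)" by (simp only: r1[unfolded e] r2[unfolded e] b)
  then show ?case using b med_nil by (simp add: state_nil init_def stL_def stR_def)
next
  case (snoc x p)
  define s where "s = state p"
  obtain l1 l2 r1 r2 where LR: "stL s = (l1,l2)" "stR s = (r1,r2)" by (metis prod.exhaust)
  note f = Inv_facts[OF Inv_st[of p], folded s_def]
  have det: "r1 * l2 = l1 * r2 + 1" and le: "l1 \<le> l2" "r1 \<le> r2" using f LR by simp_all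
  have iL: "(l1, l2) \<in> markov_index" and iR: "(r1, r2) \<in> markov_index"
    using index_facts(1,2)[of p] LR by (simp_all add: s_def)
  have IH: "M1 (l1,l2) = M2 (l1,l2)" "M1 (r1,r2) = M2 (r1,r2)" "M1 (l1 + r1, l2 + r2) = M2 (l1 + r1, l2 + r2)"
    using snoc.IH LR by (simp_all add: s_def[symmetric] med_def)
  show ?case
  proof (cases x)
    case True
    have R1: "M1 (r1 + 2 * l1, r2 + 2 * l2) = (M1 (l1, l2)^2 + M1 (r1 + l1, r2 + l2)^2) / M1 (r1, r2)"
      by (rule rule_inst[OF M1 iR iL]) (use det le in \<open>simp_all add: mult.commute\<close>)
    have R2: "M2 (r1 + 2 * l1, r2 + 2 * l2) = (M2 (l1, l2)^2 + M2 (r1 + l1, r2 + l2)^2) / M2 (r1, r2)"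
      by (rule rule_inst[OF M2 iR iL]) (use det le in \<open>simp_all add: mult.commute\<close>)
    have e: "(l1 + (l1 + r1), l2 + (l2 + r2)) = (r1 + 2 * l1, r2 + 2 * l2)" by simp
    have c: "(r1 + l1, r2 + l2) = (l1 + r1, l2 + r2)" by simp
    have new: "M1 (l1 + (l1 + r1), l2 + (l2 + r2)) = M2 (l1 + (l1 + r1), l2 + (l2 + r2))"
      unfolding e using R1 R2 IH unfolding c by simp
    show ?thesis using IH new LR True
      by (simp add: state_snoc s_def[symmetric] stepb_sel med_def)
  next
    case False
    have R1: "M1 (l1 + 2 * r1, l2 + 2 * r2) = (M1 (r1, r2)^2 + M1 (l1 + r1, l2 + r2)^2) / M1 (l1, l2)"
      by (rule rule_inst[OF M1 iL iR]) (use det le in \<open>simp_all add: mult.commute\<close>)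
    have R2: "M2 (l1 + 2 * r1, l2 + 2 * r2) = (M2 (r1, r2)^2 + M2 (l1 + r1, l2 + r2)^2) / M2 (l1, l2)"
      by (rule rule_inst[OF M2 iL iR]) (use det le in \<open>simp_all add: mult.commute\<close>)
    have e: "(l1 + r1 + r1, l2 + r2 + r2) = (l1 + 2 * r1, l2 + 2 * r2)" by simp
    have new: "M1 (l1 + r1 + r1, l2 + r2 + r2) = M2 (l1 + r1 + r1, l2 + r2 + r2)"
      unfolding e using R1 R2 IH by simp
    show ?thesis using IH new LR False
      by (simp add: state_snoc s_def[symmetric] stepb_sel med_def)
  qed
qed

lemma index_cases:
  assumes "(e, f) \<in> markov_index" "(e, f) \<noteq> (0,1)" "(e, f) \<noteq> (1,0)" "(e, f) \<noteq> (1,1)"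
  shows "coprime e f" "1 \<le> e" "e < f"
proof -
  show cop: "coprime e f" using assms(1) by (simp add: markov_index_def)
  have le: "e \<le> f" using assms(1,3) by (auto simp: markov_index_def)
  show "1 \<le> e"
  proof (rule ccontr)
    assume "\<not> 1 \<le> e"
    then have "e = 0" by simp
    then have "f = 1" using cop by simp
    then show False using assms(2) \<open>e = 0\<close> by simp
  qed
  show "e < f"
  proof (rule ccontr)
    assume "\<not> e < f"
    then have "e = f" using le by simp
    then have "e = 1" using cop by simp
    then show False using assms(4) \<open>e = f\<close> by simp
  qed
qed

lemma Mval_unique:
  assumes "markov_rules M" "\<forall>\<rho>. \<rho> \<notin> markov_index \<longrightarrow> M \<rho> = 0"
  shows "M = Mval"
proof (rule ext)
  fix \<rho> :: "nat \<times> nat"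
  obtain e f where r: "\<rho> = (e, f)" by (metis prod.exhaust)
  show "M \<rho> = Mval \<rho>"
  proof (cases "\<rho> \<in> markov_index")
    case False then show ?thesis using assms(2) r by (simp add: Mval_def)
  next
    case True
    show ?thesis
    proof (cases "\<rho> = (0,1) \<or> \<rho> = (1,0) \<or> \<rho> = (1,1)")
      case True
      then show ?thesis using assms(1) Mval_markov_rules unfolding markov_rules_def by auto
    next
      case False
      then have "coprime e f" "1 \<le> e" "e < f" using index_cases[of e f] \<open>\<rho> \<in> markov_index\<close> r by auto
      then obtain p where "med (state p) = (e, f)" using state_surj by blast
      then show ?thesis using agree[OF assms(1) Mval_markov_rules, of p] r by simp
    qed
  qed
qed

lemma markov_eq: "markov = Mval"
  unfolding markov_def
proof (rule the_equality)
  show "markov_rules Mval \<and> (\<forall>\<rho>. \<rho> \<notin> markov_index \<longrightarrow> Mval \<rho> = 0)"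
    using Mval_markov_rules by (simp add: Mval_def)
next
  fix M assume "markov_rules M \<and> (\<forall>\<rho>. \<rho> \<notin> markov_index \<longrightarrow> M \<rho> = 0)"
  then show "M = Mval" using Mval_unique by blast
qed

lemma markovP_eq:
  assumes "1 \<le> a" "a \<le> b" "coprime a b"
  shows "markovP a b = Pat (a, b)"
proof -
  define D where "D = Xk^(a - 1) * Yk^(b - 1) * Zk^(a + b - 1)"
  have Dnz: "D \<noteq> 0" using XYZ_nz by (simp add: D_def)
  have idx: "(a, b) \<in> markov_index" using assms by (simp add: markov_index_def)
  have Dk_eq: "Dk (a, b) = Xk * Yk * Zk * D"
  proof -
    have "Xk ^ a = Xk * Xk^(a-1)" "Yk ^ b = Yk * Yk^(b-1)" "Zk ^ (a+b) = Zk * Zk^(a+b-1)"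
      using pow_pred[of a Xk] pow_pred[of b Yk] pow_pred[of "a+b" Zk] assms by simp_all
    then show ?thesis by (simp add: Dk_def D_def mult_ac)
  qed
  have mk: "markov (a, b) = ev (Pat (a,b)) / D"
    using idx XYZ_nz Dnz by (simp add: markov_eq Mval_def val_def Dk_eq field_simps)
  show ?thesis unfolding markovP_def D_def[symmetric] ev_def[symmetric]
  proof (rule the_equality)
    show "markov (a, b) = ev (Pat (a, b)) / D" by (rule mk)
  next
    fix q assume "markov (a, b) = ev q / D"
    then have "ev q = ev (Pat (a,b))" using mk Dnz by (simp add: field_simps)
    then have "ev (q - Pat (a,b)) = 0" by (simp add: ev_hom)
    then have "q - Pat (a,b) = 0" by (rule ev_inj)
    then show "q = Pat (a,b)" by simp
  qed
qed

lemma Good_markovP: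
  assumes "1 \<le> a" "a \<le> b" "coprime a b"
  shows "Good (markovP a b) (a, b)"
proof (cases "(a, b) = (1, 1)")
  case True
  then show ?thesis using markovP_eq[OF assms] Good_11 by (simp add: Pat_def)
next
  case False
  have "(a, b) \<in> markov_index" using assms by (simp add: markov_index_def)
  then have "coprime a b" "1 \<le> a" "a < b" using index_cases[of a b] False assms by auto
  then obtain p where p: "med (state p) = (a, b)" using state_surj by blast
  have "Pat (a, b) = pM (state p)" using Pat_med[of p] p by simp
  then show ?thesis using markovP_eq[OF assms] Inv_facts(8)[OF Inv_st[of p]] p by simp
qed


lemma cancel_pow:
  fixes T :: "'a::idom"
  assumes "T \<noteq> 0" "T ^ k * c = T ^ k * d" shows "c = d"
  using assms by simp

lemma fin_T1:
  fixes x y :: "'a::idom"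
  assumes "x + y \<noteq> 0" "gT1 x y a b c" "a + b \<ge> 3"
  shows "c = of_int (int a - 1) * (x + y) ^ (a + b - 2) + of_int (int b - int a) * x * (x + y) ^ (a + b - 3)"
proof -
  define T where "T = x + y"
  obtain k where k: "a + b = k + 3" using assms(3) by (metis add.commute le_add_diff_inverse)
  have "T ^ 3 * c = T ^ (k + 3) * ((of_nat a - 1) * T + (of_nat b - of_nat a) * x)"
    using assms(2) unfolding gT1_def F1_def T_def[symmetric] k .
  also have "\<dots> = T ^ 3 * ((of_nat a - 1) * T ^ (k + 1) + (of_nat b - of_nat a) * x * T ^ k)"
    by (simp add: power_add algebra_simps)
  finally have "c = (of_nat a - 1) * T ^ (k + 1) + (of_nat b - of_nat a) * x * T ^ k"
    using assms(1) T_def by simp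
  moreover have "a + b - 2 = k + 1" "a + b - 3 = k" using k by simp_all
  ultimately show ?thesis unfolding T_def by simp
qed

lemma fin_V1:
  fixes x y :: "'a::idom"
  assumes "x + y \<noteq> 0" "gV1 x y a b c" "b \<ge> 3"
  shows "c = of_int (3 * int a - 1) * x ^ a * (x + y) ^ (b - 2) + of_int (int b - 2 * int a) * x ^ (a + 1) * (x + y) ^ (b - 3)"
proof -
  define T where "T = x + y"
  obtain k where k: "b = k + 3" using assms(3) by (metis add.commute le_add_diff_inverse)
  have "T ^ 3 * c = x ^ a * T ^ (k + 3) * ((3 * of_nat a - 1) * T + (of_nat b - 2 * of_nat a) * x)"
    using assms(2) unfolding gV1_def G1_def T_def[symmetric] k .
  also have "\<dots> = T ^ 3 * ((3 * of_nat a - 1) * x ^ a * T ^ (k + 1) + (of_nat b - 2 * of_nat a) * x ^ (a + 1) * T ^ k)"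
    by (simp add: power_add algebra_simps)
  finally have "c = (3 * of_nat a - 1) * x ^ a * T ^ (k + 1) + (of_nat b - 2 * of_nat a) * x ^ (a + 1) * T ^ k"
    using assms(1) T_def by simp
  moreover have "b - 2 = k + 1" "b - 3 = k" using k by simp_all
  ultimately show ?thesis unfolding T_def by simp
qed

lemma even_ints:
  fixes a b :: int
  shows "even ((a - 1) * (a - 2))" "even ((b - a)^2 + 5 * a - 3 * b)"
proof -
  show "even ((a - 1) * (a - 2))" by (cases "even a") auto
  have e: "(b - a)^2 + 5 * a - 3 * b = (b - a) * (b - a - 3) + 2 * a" by (simp add: algebra_simps power2_eq_square)
  have "even ((b - a) * (b - a - 3))" by (cases "even (b - a)") auto
  then show "even ((b - a)^2 + 5 * a - 3 * b)" unfolding e by (intro dvd_add) simp_all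
qed

lemma fin_T2:
  fixes x y :: "'a::{idom, ring_char_0}"
  assumes "x + y \<noteq> 0" "gT2 x y a b c" "a + b \<ge> 5"
  shows "c = of_int ((int a - 1) * (int a - 2) div 2) * (x + y) ^ (a + b - 3)
    + of_int (int a * (int b - int a) - int a) * x * (x + y) ^ (a + b - 4)
    + of_int (((int b - int a)^2 + 5 * int a - 3 * int b) div 2) * x ^ 2 * (x + y) ^ (a + b - 5)"
proof -
  define T where "T = x + y"
  obtain k where k: "a + b = k + 5" using assms(3) by (metis add.commute le_add_diff_inverse)
  define \<alpha> :: int where "\<alpha> = (int a - 1) * (int a - 2) div 2"
  define \<gamma> :: int where "\<gamma> = ((int b - int a)^2 + 5 * int a - 3 * int b) div 2"
  have a2: "2 * \<alpha> = (int a - 1) * (int a - 2)" unfolding \<alpha>_def using even_ints(1)[of "int a"] by simp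
  have g2: "2 * \<gamma> = (int b - int a)^2 + 5 * int a - 3 * int b" unfolding \<gamma>_def using even_ints(2)[of "int b" "int a"] by simp
  have a2': "2 * (of_int \<alpha> :: 'a) = (of_nat a - 1) * (of_nat a - 2)"
    using arg_cong[OF a2, of "of_int :: int \<Rightarrow> 'a"] by simp
  have g2': "2 * (of_int \<gamma> :: 'a) = (of_nat b - of_nat a)^2 + 5 * of_nat a - 3 * of_nat b"
    using arg_cong[OF g2, of "of_int :: int \<Rightarrow> 'a"] by simp
  define R where "R = of_int \<alpha> * T ^ (k + 2) + of_int (int a * (int b - int a) - int a) * x * T ^ (k + 1)
     + of_int \<gamma> * x ^ 2 * T ^ k"
  have "T ^ 5 * (2 * c) = 2 * T ^ 5 * c" by simp
  also have "\<dots> = T ^ (k + 5) * F2 x T a b"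
    using assms(2) unfolding gT2_def T_def[symmetric] k .
  also have "\<dots> = T ^ 5 * (2 * R)"
  proof -
    have F: "F2 x T a b = 2 * of_int \<alpha> * T^2 + 2 * of_int (int a * (int b - int a) - int a) * x * T + 2 * of_int \<gamma> * x^2"
      unfolding F2_def a2' g2' by simp
    show ?thesis unfolding F R_def by (simp add: power_add algebra_simps eval_nat_numeral)
  qed
  finally have "2 * c = 2 * R" using assms(1) T_def by simp
  then have "c = R" by simp
  moreover have "a + b - 3 = k + 2" "a + b - 4 = k + 1" "a + b - 5 = k" using k by simp_all
  ultimately show ?thesis unfolding R_def T_def \<alpha>_def \<gamma>_def by simp
qed


definition EV :: "int poly poly \<Rightarrow> tri" where "EV q = map_poly (\<lambda>x. [:x:]) q"
definition EU :: "int poly poly \<Rightarrow> tri" where "EU q = map_poly (map_poly (\<lambda>x. [:x:])) q"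

lemma EV_hom: "EV (a + b) = EV a + EV b" "EV (a * b) = EV a * EV b" "EV (a ^ n) = EV a ^ n"
  "EV (of_int k) = of_int k" "EV xI = varU" "EV yO = varW"
  unfolding EV_def
  by (rule map_poly_add_hom map_poly_mult_hom map_poly_power_hom; simp)+
     (simp_all add: of_int_poly xI_def yO_def varU_def varW_def map_poly_pCons one_pCons)

lemma mpc_hom: "map_poly (\<lambda>x. [:x:]) (a + b) = map_poly (\<lambda>x. [:x:]) a + map_poly (\<lambda>x. [:x::int:]) b"
  "map_poly (\<lambda>x. [:x:]) (a * b) = map_poly (\<lambda>x. [:x:]) a * map_poly (\<lambda>x. [:x::int:]) b"
  "map_poly (\<lambda>x. [:x::int:]) 1 = 1"
  by (rule map_poly_add_hom map_poly_mult_hom; simp add: mult.commute)+ simp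

lemma EU_hom: "EU (a + b) = EU a + EU b" "EU (a * b) = EU a * EU b" "EU (a ^ n) = EU a ^ n"
  "EU xI = varV" "EU yO = varW"
  unfolding EU_def
  by (rule map_poly_add_hom map_poly_mult_hom map_poly_power_hom; simp add: mpc_hom)+
     (simp_all add: xI_def yO_def varV_def varW_def map_poly_pCons one_pCons)

lemma coeffV_EV: "coeffV P k = EV (cV k P)"
  unfolding coeffV_def EV_def cV_def by (simp add: map_poly_map_poly o_def)

lemma coeffV_EV1: "coeffV P 1 = EV (cV (Suc 0) P)"
  by (simp add: coeffV_EV)

lemma coeffU_EU: "coeffU P 0 = EU (cU P)"
  unfolding coeffU_def EU_def cU_def by (simp add: map_poly_map_poly o_def)

lemma const_hom: "[:a + b:] = [:a:] + [:b:]" "[:a * b:] = [:a:] * [:b:]"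
  "[:of_int k:] = of_int k" "[:xI:] = varU" "[:yO:] = varV"
  by (simp_all add: of_int_poly xI_def yO_def varU_def varV_def mult.commute)

lemma coeffW_12: "coeffW P 1 = [:coeff P (Suc 0):]" "coeffW P 2 = [:coeff P 2:]"
  by (simp_all add: coeffW_def)

theorem theorem4p1:
  fixes a b :: nat
  assumes "1 \<le> a" and "a \<le> b" and "coprime a b"
  defines "P \<equiv> markovP a b"
  shows "coeffU P 0 = varV ^ b * (varV + varW) ^ (a - 1)
    \<and> coeffV P 0 = varU ^ a * (varU + varW) ^ (b - 1)
    \<and> (b \<ge> 3 \<longrightarrow> coeffV P 1 =
           of_int (3 * int a - 1) * varU ^ a * (varU + varW) ^ (b - 2)
         + of_int (int b - 2 * int a) * varU ^ (a + 1) * (varU + varW) ^ (b - 3))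
    \<and> coeffW P 0 = (varU + varV) ^ (a + b - 1)
    \<and> (a + b \<ge> 3 \<longrightarrow> coeffW P 1 =
           of_int (int a - 1) * (varU + varV) ^ (a + b - 2)
         + of_int (int b - int a) * varU * (varU + varV) ^ (a + b - 3))
    \<and> (a + b \<ge> 5 \<longrightarrow> coeffW P 2 =
           of_int ((int a - 1) * (int a - 2) div 2) * (varU + varV) ^ (a + b - 3)
         + of_int (int a * (int b - int a) - int a) * varU * (varU + varV) ^ (a + b - 4)
         + of_int (((int b - int a)^2 + 5 * int a - 3 * int b) div 2)
             * varU ^ 2 * (varU + varV) ^ (a + b - 5))"
proof -
  have G: "Good P (a, b)" unfolding P_def by (rule Good_markovP[OF assms(1-3)])
  have n01: "(a, b) \<noteq> (0, 1)" using assms(1) by simp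
  have G0: "gT0 xI yO a b (coeff P 0)" "gV0 xI yO a b (cV 0 P)"
    "gT1 xI yO a b (coeff P (Suc 0))" "gU0 xI yO a b (cU P)"
    using G n01 unfolding Good_def by auto
  have G2: "(a, b) \<noteq> (1, 1) \<Longrightarrow> gT2 xI yO a b (coeff P 2) \<and> gV1 xI yO a b (cV (Suc 0) P)"
    using G n01 unfolding Good_def by auto
  have s1: "coeffU P 0 = varV ^ b * (varV + varW) ^ (a - 1)"
    using G0(4) unfolding coeffU_EU gU0_def by (simp add: EU_hom)
  have s2: "coeffV P 0 = varU ^ a * (varU + varW) ^ (b - 1)"
    using G0(2) unfolding coeffV_EV gV0_def by (simp add: EV_hom)
  have s3: "b \<ge> 3 \<longrightarrow> coeffV P 1 =
           of_int (3 * int a - 1) * varU ^ a * (varU + varW) ^ (b - 2)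
         + of_int (int b - 2 * int a) * varU ^ (a + 1) * (varU + varW) ^ (b - 3)"
  proof
    assume b3: "b \<ge> 3"
    then have "(a, b) \<noteq> (1, 1)" by auto
    then have "gV1 xI yO a b (cV (Suc 0) P)" using G2 by simp
    from fin_V1[OF tt_nz this b3] have "EV (cV (Suc 0) P) = EV (of_int (3 * int a - 1) * xI ^ a * (xI + yO) ^ (b - 2) +
    of_int (int b - 2 * int a) * xI ^ (a + 1) * (xI + yO) ^ (b - 3))" by simp
    then show "coeffV P 1 =
           of_int (3 * int a - 1) * varU ^ a * (varU + varW) ^ (b - 2)
         + of_int (int b - 2 * int a) * varU ^ (a + 1) * (varU + varW) ^ (b - 3)"
      unfolding coeffV_EV1 by (simp only: EV_hom)
  qed
  have s4: "coeffW P 0 = (varU + varV) ^ (a + b - 1)"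
    using G0(1) unfolding coeffW_def gT0_def by (simp add: const_hom const_pow[symmetric])
  have s5: "a + b \<ge> 3 \<longrightarrow> coeffW P 1 =
           of_int (int a - 1) * (varU + varV) ^ (a + b - 2)
         + of_int (int b - int a) * varU * (varU + varV) ^ (a + b - 3)"
  proof
    assume n3: "a + b \<ge> 3"
    from fin_T1[OF tt_nz G0(3) n3] have "[:coeff P (Suc 0):] = [:of_int (int a - 1) * (xI + yO) ^ (a + b - 2) +
    of_int (int b - int a) * xI * (xI + yO) ^ (a + b - 3):]" by simp
    then show "coeffW P 1 =
           of_int (int a - 1) * (varU + varV) ^ (a + b - 2)
         + of_int (int b - int a) * varU * (varU + varV) ^ (a + b - 3)"
      unfolding coeffW_12 by (simp only: const_hom const_pow[symmetric])
  qed
  have s6: "a + b \<ge> 5 \<longrightarrow> coeffW P 2 =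
           of_int ((int a - 1) * (int a - 2) div 2) * (varU + varV) ^ (a + b - 3)
         + of_int (int a * (int b - int a) - int a) * varU * (varU + varV) ^ (a + b - 4)
         + of_int (((int b - int a)^2 + 5 * int a - 3 * int b) div 2)
             * varU ^ 2 * (varU + varV) ^ (a + b - 5)"
  proof
    assume n5: "a + b \<ge> 5"
    then have "(a, b) \<noteq> (1, 1)" by auto
    then have "gT2 xI yO a b (coeff P 2)" using G2 by simp
    from fin_T2[OF tt_nz this n5] have "[:coeff P 2:] = [:of_int ((int a - 1) * (int a - 2) div 2) * (xI + yO) ^ (a + b - 3) +
    of_int (int a * (int b - int a) - int a) * xI * (xI + yO) ^ (a + b - 4) +
    of_int (((int b - int a)^2 + 5 * int a - 3 * int b) div 2) * xI ^ 2 * (xI + yO) ^ (a + b - 5):]"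
      by (rule arg_cong)
    then show "coeffW P 2 =
           of_int ((int a - 1) * (int a - 2) div 2) * (varU + varV) ^ (a + b - 3)
         + of_int (int a * (int b - int a) - int a) * varU * (varU + varV) ^ (a + b - 4)
         + of_int (((int b - int a)^2 + 5 * int a - 3 * int b) div 2)
             * varU ^ 2 * (varU + varV) ^ (a + b - 5)"
      unfolding coeffW_12 by (simp only: const_hom const_pow[symmetric])
  qed
  show ?thesis using s1 s2 s3 s4 s5 s6 by blast
qed


end
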